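(* Let $N=2^n$, let $\{|\lambda_j\rangle\}_{j=0}^{N-1}$ be an orthonormal basis and $\mathcal{Q}$ a unitary with $U_{\omega_\lambda}=\mathcal{Q}^\dagger U_\omega\mathcal{Q}$, such that implementing $\mathcal{Q}$ requires $\mathcal{O}(\chi)$ 1- and 2-qubit gates. Let $\mathcal{A}=P(U_{\omega_\lambda})=\sum_{k=0}^{d}\alpha_kU_{\omega_\lambda}^k$ with $\deg P=d$ and $|P(x)|^2\le c$ for all $x\in\mathbb{T}$. Then $\mathcal{A}/\sqrt{c}$ can be implemented (as the top-left block, with respect to one ancilla qubit, of a unitary circuit) using $\mathcal{O}(d\log N+\chi)$ 1- and 2-qubit gates.
   Context: $\mathbb{T}=\{x\in\mathbb{C}:|x|=1\}$, $\omega_N=e^{2\pi i/N}$, $U_\omega=\sum_{j=0}^{N-1}\omega_N^j|j\rangle\langle j|$ in the computational basis, and $U_{\omega_\lambda}=\sum_{j=0}^{N-1}\omega_N^j|\lambda_j\rangle\langle\lambda_j|$. Gates are arbitrary 1- and 2-qubit unitaries. *)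

theory Defs
  imports Complex_Main "Jordan_Normal_Form.Matrix"
begin

(* Conventions: an n-qubit register is C^(2^n); basis index r encodes qubit q in bit q of r. *)

definition qbit :: "nat \<Rightarrow> nat \<Rightarrow> nat" where
  "qbit r q = (r div 2 ^ q) mod 2"

definition loc_index :: "nat list \<Rightarrow> nat \<Rightarrow> nat" where
  "loc_index qs r = (\<Sum>t<length qs. qbit r (qs ! t) * 2 ^ t)"

definition adj :: "complex mat \<Rightarrow> complex mat" where
  "adj M = mat (dim_col M) (dim_row M) (\<lambda>(i, j). cnj (M $$ (j, i)))"

definition is_unitary :: "nat \<Rightarrow> complex mat \<Rightarrow> bool" where
  "is_unitary m U \<longleftrightarrow> U \<in> carrier_mat m m \<and> adj U * U = 1\<^sub>m m \<and> U * adj U = 1\<^sub>m m"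

(* a gate: ordered list of the qubits it acts on, and a unitary on those qubits *)
type_synonym gate = "nat list \<times> complex mat"

definition valid_gate :: "nat \<Rightarrow> gate \<Rightarrow> bool" where
  "valid_gate n g \<longleftrightarrow> (let (qs, G) = g in
      distinct qs \<and> (length qs = 1 \<or> length qs = 2) \<and> set qs \<subseteq> {..<n}
      \<and> is_unitary (2 ^ length qs) G)"

definition embed_gate :: "nat \<Rightarrow> gate \<Rightarrow> complex mat" where
  "embed_gate n g = (let (qs, G) = g in
     mat (2 ^ n) (2 ^ n) (\<lambda>(r, s).
       if (\<forall>q<n. q \<notin> set qs \<longrightarrow> qbit r q = qbit s q)
       then G $$ (loc_index qs r, loc_index qs s) else 0))"

definition circuit_mat :: "nat \<Rightarrow> gate list \<Rightarrow> complex mat" where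
  "circuit_mat n gs = foldr (\<lambda>g M. embed_gate n g * M) gs (1\<^sub>m (2 ^ n))"

definition implements :: "nat \<Rightarrow> gate list \<Rightarrow> complex mat \<Rightarrow> bool" where
  "implements n gs U \<longleftrightarrow> (\<forall>g\<in>set gs. valid_gate n g) \<and> circuit_mat n gs = U"

definition omega :: "nat \<Rightarrow> complex" where
  "omega N = cis (2 * pi / real N)"

definition U_omega :: "nat \<Rightarrow> complex mat" where
  "U_omega N = mat N N (\<lambda>(r, s). if r = s then omega N ^ r else 0)"

definition U_omega_lambda :: "nat \<Rightarrow> (nat \<Rightarrow> complex vec) \<Rightarrow> complex mat" where
  "U_omega_lambda N lam = mat N N (\<lambda>(r, s). \<Sum>j<N. omega N ^ j * (lam j $ r) * cnj (lam j $ s))"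

definition orthonormal_basis :: "nat \<Rightarrow> (nat \<Rightarrow> complex vec) \<Rightarrow> bool" where
  "orthonormal_basis N lam \<longleftrightarrow> (\<forall>j<N. lam j \<in> carrier_vec N) \<and>
     (\<forall>j<N. \<forall>k<N. (\<Sum>i<N. cnj (lam j $ i) * lam k $ i) = (if j = k then 1 else 0))"

definition mat_poly :: "nat \<Rightarrow> (nat \<Rightarrow> complex) \<Rightarrow> nat \<Rightarrow> complex mat \<Rightarrow> complex mat" where
  "mat_poly N alpha d U = foldr (\<lambda>k M. alpha k \<cdot>\<^sub>m (U ^\<^sub>m k) + M) [0..<Suc d] (0\<^sub>m N N)"

(* V (on n+1 qubits, ancilla = qubit n) has the 2^n x 2^n matrix B as top-left block,
   i.e. (<0|_anc (x) I) V (|0>_anc (x) I) = B *)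
definition top_left_block :: "nat \<Rightarrow> complex mat \<Rightarrow> complex mat \<Rightarrow> bool" where
  "top_left_block n V B \<longleftrightarrow> (\<forall>i<2 ^ n. \<forall>j<2 ^ n. V $$ (i, j) = B $$ (i, j))"

end

theory Submission
  imports Defs "HOL-Computational_Algebra.Fundamental_Theorem_Algebra"
begin


definition cay :: "complex \<Rightarrow> complex" where
  "cay w = (1 + \<i> * w) / (1 - \<i> * w)"

lemma cay_den: "1 - \<i> * complex_of_real t \<noteq> 0"
proof
  assume "1 - \<i> * complex_of_real t = 0"
  then have "Re (1 - \<i> * complex_of_real t) = 0" by simp
  then show False by simp
qed

lemma cay_norm: "cmod (cay (of_real t)) = 1"
proof -
  have "1 + \<i> * complex_of_real t = cnj (1 - \<i> * complex_of_real t)" by simp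
  then have "cmod (1 + \<i> * complex_of_real t) = cmod (1 - \<i> * complex_of_real t)"
    by (metis complex_mod_cnj)
  then show ?thesis unfolding cay_def using cay_den[of t] by (simp add: norm_divide)
qed

lemma cay_inj: "inj (\<lambda>t::real. cay (of_real t))"
proof (rule injI)
  fix s t :: real assume "cay (of_real s) = cay (of_real t)"
  then have "(1 + \<i> * of_real s) * (1 - \<i> * of_real t) = (1 + \<i> * of_real t) * (1 - \<i> * of_real s)"
    unfolding cay_def using cay_den[of s] cay_den[of t] by (simp add: divide_eq_eq field_simps)
  then have "2 * \<i> * (complex_of_real s - of_real t) = 0" by (simp add: algebra_simps)
  then show "s = t" by simp
qed

lemma cay_0: "cay 0 = 1" by (simp add: cay_def)

lemma cay_ne1: "t \<noteq> 0 \<Longrightarrow> cay (of_real t) \<noteq> 1"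
  using cay_inj cay_0 by (metis injD of_real_0)

lemma circle_infinite: "infinite {x::complex. cmod x = 1}"
proof
  assume "finite {x::complex. cmod x = 1}"
  moreover have "range (\<lambda>t::real. cay (of_real t)) \<subseteq> {x::complex. cmod x = 1}"
    using cay_norm by auto
  ultimately have "finite (range (\<lambda>t::real. cay (of_real t)))" by (rule finite_subset[rotated])
  then have "finite (UNIV::real set)" using finite_imageD cay_inj by (metis inj_on_subset subset_UNIV)
  then show False using infinite_UNIV_char_0 by blast
qed

lemma poly_eq_circle:
  fixes p q :: "complex poly"
  assumes "\<And>x. cmod x = 1 \<Longrightarrow> poly p x = poly q x"
  shows "p = q"
proof (rule ccontr)
  assume "p \<noteq> q"
  then have "p - q \<noteq> 0" by simp
  then have "finite {x. poly (p - q) x = 0}" by (rule poly_roots_finite)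
  moreover have "{x::complex. cmod x = 1} \<subseteq> {x. poly (p - q) x = 0}" using assms by auto
  ultimately show False using circle_infinite finite_subset by blast
qed

lemma poly_sum_le:
  fixes p :: "'a::comm_semiring_1 poly"
  assumes "degree p \<le> n"
  shows "poly p x = (\<Sum>k\<le>n. coeff p k * x ^ k)"
proof -
  have "poly p x = (\<Sum>k\<le>degree p. coeff p k * x ^ k)" by (rule poly_altdef)
  also have "\<dots> = (\<Sum>k\<le>n. coeff p k * x ^ k)"
    by (rule sum.mono_neutral_left) (use assms in \<open>auto intro: le_degree\<close>)
  finally show ?thesis .
qed

definition rpoly :: "nat \<Rightarrow> complex poly \<Rightarrow> complex poly" where
  "rpoly n p = (\<Sum>k\<le>n. monom (cnj (coeff p k)) (n - k))"

lemma degree_rpoly: "degree (rpoly n p) \<le> n"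
  unfolding rpoly_def by (rule degree_sum_le) (auto intro: order.trans[OF degree_monom_le])

lemma poly_rpoly_gen:
  assumes "degree p \<le> n" "x \<noteq> 0"
  shows "poly (rpoly n p) x = x ^ n * cnj (poly p (1 / cnj x))"
proof -
  have "poly (rpoly n p) x = (\<Sum>k\<le>n. cnj (coeff p k) * x ^ (n - k))"
    unfolding rpoly_def by (simp add: poly_sum poly_monom)
  also have "\<dots> = (\<Sum>k\<le>n. x ^ n * (cnj (coeff p k) * (1 / x) ^ k))"
    by (rule sum.cong) (use assms in \<open>auto simp: power_diff power_divide\<close>)
  also have "\<dots> = x ^ n * cnj (\<Sum>k\<le>n. coeff p k * (1 / cnj x) ^ k)"
    by (simp add: sum_distrib_left)
  also have "\<dots> = x ^ n * cnj (poly p (1 / cnj x))"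
    using poly_sum_le[OF assms(1)] by simp
  finally show ?thesis .
qed

lemma circ_inv: "cmod x = 1 \<Longrightarrow> 1 / cnj x = x"
proof -
  assume "cmod x = 1"
  then have "x * cnj x = 1" using complex_norm_square[of x] by simp
  then show ?thesis by (metis divide_eq_eq mult.commute mult_zero_left zero_neq_one)
qed

lemma poly_rpoly:
  assumes "degree p \<le> n" "cmod x = 1"
  shows "poly (rpoly n p) x = x ^ n * cnj (poly p x)"
proof -
  have "x \<noteq> 0" using assms by auto
  then show ?thesis using poly_rpoly_gen[OF assms(1)] circ_inv[OF assms(2)] by simp
qed

lemma coeff_rpoly:
  assumes "k \<le> n"
  shows "coeff (rpoly n p) k = cnj (coeff p (n - k))"
proof -
  have "coeff (rpoly n p) k = (\<Sum>j\<le>n. if n - j = k then cnj (coeff p j) else 0)"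
    unfolding rpoly_def by (simp add: coeff_sum coeff_monom)
  also have "\<dots> = (\<Sum>j\<in>{n-k}. cnj (coeff p j))"
    by (rule sum.mono_neutral_cong_right) (use assms in auto)
  finally show ?thesis by simp
qed

lemma rpoly_0[simp]: "rpoly n 0 = 0"
  unfolding rpoly_def by simp

lemma rpoly_mult:
  assumes "degree a \<le> m" "degree b \<le> n"
  shows "rpoly (m + n) (a * b) = rpoly m a * rpoly n b"
proof (rule poly_eq_circle)
  fix x :: complex assume x: "cmod x = 1"
  have "degree (a * b) \<le> m + n" using assms degree_mult_le[of a b] by simp
  then show "poly (rpoly (m + n) (a * b)) x = poly (rpoly m a * rpoly n b) x"
    using x assms by (simp add: poly_rpoly power_add)
qed

lemma rpoly_Suc:
  assumes "degree q \<le> e"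
  shows "rpoly (Suc e) q = pCons 0 (rpoly e q)"
proof (rule poly_eq_circle)
  fix x :: complex assume x: "cmod x = 1"
  show "poly (rpoly (Suc e) q) x = poly (pCons 0 (rpoly e q)) x"
    using x assms by (simp add: poly_rpoly)
qed

definition nn :: "complex \<Rightarrow> bool" where
  "nn w \<longleftrightarrow> Im w = 0 \<and> 0 \<le> Re w"

definition good :: "nat \<Rightarrow> complex poly \<Rightarrow> bool" where
  "good d T \<longleftrightarrow> (\<forall>x. cmod x = 1 \<longrightarrow> nn (poly T x / x ^ d))"

lemma good_sym:
  assumes "degree T \<le> 2 * d" "good d T"
  shows "rpoly (2 * d) T = T"
proof (rule poly_eq_circle)
  fix x :: complex assume x: "cmod x = 1"
  then have x0: "x \<noteq> 0" by auto
  have xc: "x * cnj x = 1" using complex_norm_square[of x] x by simp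
  define w where "w = poly T x / x ^ d"
  have "nn w" using assms(2) x unfolding good_def w_def by auto
  then have cw: "cnj w = w" unfolding nn_def by (simp add: complex_eq_iff)
  have Tx: "poly T x = x ^ d * w" using x0 unfolding w_def by simp
  have "poly (rpoly (2 * d) T) x = x ^ (2 * d) * cnj (poly T x)"
    by (rule poly_rpoly[OF assms(1) x])
  also have "\<dots> = x ^ d * w * (x * cnj x) ^ d"
    unfolding Tx using cw by (simp add: power_mult_distrib mult_2 power_add)
  also have "\<dots> = poly T x" using xc Tx by simp
  finally show "poly (rpoly (2 * d) T) x = poly T x" .
qed

lemma closed_nn: "closed {w. nn w}"
proof -
  have "{w. nn w} = {w. Im w = 0} \<inter> {w. 0 \<le> Re w}" unfolding nn_def by auto
  moreover have "closed {w::complex. Im w = 0}"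
    by (rule closed_Collect_eq) (auto intro: continuous_intros)
  moreover have "closed {w::complex. 0 \<le> Re w}"
    by (rule closed_Collect_le) (auto intro: continuous_intros)
  ultimately show ?thesis by auto
qed

lemma nn_limit:
  fixes S :: "complex poly"
  assumes z: "cmod z = 1"
    and h: "\<And>x. cmod x = 1 \<Longrightarrow> x \<noteq> z \<Longrightarrow> nn (poly S x / x ^ e)"
  shows "nn (poly S z / z ^ e)"
proof -
  define g where "g t = poly S (z * cay (of_real t)) / (z * cay (of_real t)) ^ e" for t :: real
  have z0: "z \<noteq> 0" using z by auto
  have cont: "isCont (\<lambda>t. z * cay (of_real t)) 0"
    unfolding cay_def using cay_den[of 0] by (auto intro!: continuous_intros)
  have "isCont g 0"
    unfolding g_def using z0 cay_0
    by (auto intro!: continuous_intros isCont_o2[OF cont] simp: cay_0)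
  then have "(g \<longlongrightarrow> g 0) (at 0)" by (simp add: isCont_def)
  moreover have "\<forall>\<^sub>F t in at (0::real). g t \<in> {w. nn w}"
  proof -
    have "\<forall>\<^sub>F t in at (0::real). t \<noteq> 0" by (simp add: eventually_at_filter)
    moreover have "t \<noteq> 0 \<Longrightarrow> g t \<in> {w. nn w}" for t
    proof -
      assume "t \<noteq> 0"
      then have "z * cay (of_real t) \<noteq> z" using cay_ne1[of t] z0 by auto
      moreover have "cmod (z * cay (of_real t)) = 1" using z cay_norm[of t] by (simp add: norm_mult)
      ultimately show ?thesis using h unfolding g_def by auto
    qed
    ultimately show ?thesis by (auto elim: eventually_mono)
  qed
  ultimately have "g 0 \<in> {w. nn w}"
    using Lim_in_closed_set[OF closed_nn] by (metis at_neq_bot)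
  then show ?thesis unfolding g_def by (simp add: cay_0)
qed

lemma cay_deriv: "(cay has_field_derivative 2 * \<i>) (at 0)"
proof -
  have "((\<lambda>w. (1 + \<i> * w) / (1 - \<i> * w)) has_field_derivative
        (\<i> * (1 - \<i> * 0) - (1 + \<i> * 0) * (- \<i>)) / ((1 - \<i> * 0) * (1 - \<i> * 0))) (at 0)"
    by (rule DERIV_divide) (auto intro!: derivative_eq_intros)
  then show ?thesis unfolding cay_def[abs_def] by simp
qed

lemma good_double_root:
  assumes g: "good d T" and z: "cmod z = 1" and r: "poly T z = 0"
  shows "poly (pderiv T) z = 0"
proof -
  have z0: "z \<noteq> 0" using z by auto
  define G where "G w = z * cay w" for w
  have G0: "G 0 = z" by (simp add: G_def cay_0)
  have dG: "(G has_field_derivative z * (2 * \<i>)) (at 0)"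
    unfolding G_def[abs_def] by (rule DERIV_cmult[OF cay_deriv])
  have dT: "((\<lambda>w. poly T (G w)) has_field_derivative poly (pderiv T) z * (z * (2 * \<i>))) (at 0)"
    using DERIV_chain2[OF poly_DERIV dG] G0 by simp
  have dP: "((\<lambda>w. G w ^ d) has_field_derivative of_nat d * (z * (2 * \<i>) * G 0 ^ (d - Suc 0))) (at 0)"
    by (rule DERIV_power[OF dG])
  define D where "D = poly (pderiv T) z * (z * (2 * \<i>)) / z ^ d"
  have dH: "((\<lambda>w. poly T (G w) / G w ^ d) has_field_derivative D) (at 0)"
  proof -
    have "((\<lambda>w. poly T (G w) / G w ^ d) has_field_derivative
       (poly (pderiv T) z * (z * (2 * \<i>)) * G 0 ^ d - poly T (G 0) * (of_nat d * (z * (2 * \<i>) * G 0 ^ (d - Suc 0))))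
        / (G 0 ^ d * G 0 ^ d)) (at 0)"
      by (rule DERIV_divide[OF dT dP]) (simp add: G0 z0)
    then show ?thesis unfolding D_def using G0 r z0 by simp
  qed
  define H where "H t = poly T (G (of_real t)) / G (of_real t) ^ d" for t :: real
  have vH: "(H has_vector_derivative D) (at 0)"
    unfolding H_def using has_vector_derivative_real_field[of "\<lambda>w. poly T (G w) / G w ^ d" D 0] dH
    by simp
  have onc: "cmod (G (of_real t)) = 1" for t
    using z cay_norm[of t] by (simp add: G_def norm_mult)
  have nnH: "nn (H t)" for t using g onc unfolding good_def H_def by blast
  have H0: "H 0 = 0" unfolding H_def using G0 r by simp
  have "Re D = 0"
  proof (rule DERIV_local_min[of "\<lambda>t. Re (H t)" "Re D" 0 1])
    show "((\<lambda>t. Re (H t)) has_real_derivative Re D) (at 0)" by (rule has_field_derivative_Re[OF vH])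
    show "\<forall>y. \<bar>0 - y\<bar> < 1 \<longrightarrow> Re (H 0) \<le> Re (H y)" using nnH H0 unfolding nn_def by simp
  qed simp
  moreover have "Im D = 0"
  proof -
    have a: "((\<lambda>t. Im (H t)) has_real_derivative Im D) (at 0)"
      using vH has_vector_derivative_complex_iff by blast
    have "(\<lambda>t. Im (H t)) = (\<lambda>t. 0)" using nnH unfolding nn_def by auto
    then have "((\<lambda>t. Im (H t)) has_real_derivative 0) (at 0)" by simp
    then show ?thesis using a DERIV_unique by blast
  qed
  ultimately have "D = 0" by (simp add: complex_eq_iff)
  then show ?thesis unfolding D_def using z0 by simp
qed

lemma degree0_const: "degree (T::'a::zero poly) = 0 \<Longrightarrow> T = [:coeff T 0:]"
  by (rule poly_eqI) (auto simp: coeff_pCons coeff_eq_0 split: nat.split)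

lemma rpoly_lin: "rpoly 1 [:- z, 1:] = [:1, - cnj z:]"
  unfolding rpoly_def by (simp add: monom_altdef numeral_2_eq_2 atMost_Suc)

lemma nn_scale: "c > 0 \<Longrightarrow> nn (complex_of_real c * w) \<Longrightarrow> nn w"
  unfolding nn_def by (simp add: zero_le_mult_iff)

lemma FR:
  "degree T \<le> 2 * d \<Longrightarrow> good d T \<Longrightarrow> \<exists>q. degree q \<le> d \<and> T = q * rpoly d q"
proof (induction d arbitrary: T)
  case 0
  then have T: "T = [:coeff T 0:]" using degree0_const by simp
  have "nn (poly T 1 / 1 ^ 0)" using "0.prems"(2) unfolding good_def by simp
  moreover have "poly T 1 = coeff T 0" by (subst T) simp
  ultimately have c: "nn (coeff T 0)" by simp
  define q where "q = [:complex_of_real (sqrt (Re (coeff T 0))):]"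
  have "rpoly 0 q = q" unfolding rpoly_def q_def by (simp add: monom_0)
  moreover have "q * q = T"
    using c unfolding q_def nn_def
    by (subst T) (simp add: complex_eq_iff real_sqrt_mult[symmetric])
  ultimately show ?case by (intro exI[of _ q]) (simp add: q_def)
next
  case (Suc e T)
  show ?case
  proof (cases "T = 0")
    case True
    then show ?thesis by (intro exI[of _ 0]) simp
  next
    case Tn0: False
    have sym: "rpoly (2 * Suc e) T = T" using good_sym Suc.prems by blast
    have ctop: "coeff T (2 * Suc e) = cnj (coeff T 0)"
      using coeff_rpoly[of "2 * Suc e" "2 * Suc e" T] sym by simp
    show ?thesis
    proof (cases "coeff T 0 = 0")
      case True
      obtain a T1 where TT: "T = pCons a T1" by (rule pCons_cases)
      then have a0: "a = 0" using True by simp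
      have "degree T \<noteq> 2 * Suc e" using ctop True Tn0 by (metis complex_cnj_zero leading_coeff_0_iff)
      then have dT: "degree T \<le> Suc (2 * e)" using Suc.prems(1) by simp
      have dT1: "degree T1 \<le> 2 * e"
      proof (cases "T1 = 0")
        case False
        then show ?thesis using dT TT degree_pCons_eq by fastforce
      qed simp
      have gT1: "good e T1"
        unfolding good_def
      proof (intro allI impI)
        fix x :: complex assume x: "cmod x = 1"
        then have x0: "x \<noteq> 0" by auto
        have "nn (poly T x / x ^ Suc e)" using Suc.prems(2) x unfolding good_def by blast
        moreover have "poly T x / x ^ Suc e = poly T1 x / x ^ e" using TT a0 x0 by simp
        ultimately show "nn (poly T1 x / x ^ e)" by simp
      qed
      obtain q1 where q1: "degree q1 \<le> e" "T1 = q1 * rpoly e q1" using Suc.IH[OF dT1 gT1] by blast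
      have "T = q1 * pCons 0 (rpoly e q1)" using TT a0 q1(2) by (simp add: mult_pCons_right)
      also have "\<dots> = q1 * rpoly (Suc e) q1" using rpoly_Suc[OF q1(1)] by simp
      finally show ?thesis using q1(1) by (intro exI[of _ q1]) simp
    next
      case c0: False
      have "coeff T (2 * Suc e) \<noteq> 0" using ctop c0 by simp
      then have degT: "degree T = 2 * Suc e" using Suc.prems(1) le_degree by (meson antisym)
      then have "\<not> constant (poly T)" by (simp add: constant_degree)
      then obtain z where rz: "poly T z = 0" using fundamental_theorem_of_algebra by blast
      have z0: "z \<noteq> 0" using rz c0 by (metis poly_0_coeff_0)
      define r where "r = [:- z, 1:]"
      have Rr: "rpoly 1 r = [:1, - cnj z:]" unfolding r_def by (rule rpoly_lin)
      have dr: "degree r = 1" unfolding r_def by simp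
      define B where "B = r * rpoly 1 r"
      have "\<exists>S. T = B * S"
      proof (cases "cmod z = 1")
        case True
        have "r dvd T" using rz poly_eq_0_iff_dvd r_def by blast
        then obtain T2 where T2: "T = r * T2" by (elim dvdE)
        have "poly (pderiv T) z = 0" by (rule good_double_root[OF Suc.prems(2) True rz])
        then have "poly T2 z = 0" unfolding T2 pderiv_mult by (simp add: r_def pderiv_pCons)
        then have "r dvd T2" using poly_eq_0_iff_dvd r_def by blast
        then obtain S2 where S2: "T2 = r * S2" by (elim dvdE)
        have zc: "z * cnj z = 1" using complex_norm_square[of z] True by simp
        have "r = smult (- z) (rpoly 1 r)" by (simp only: Rr) (simp add: r_def zc)
        then have "T = B * smult (- z) S2" unfolding T2 S2 B_def
          by (metis mult.assoc mult_smult_left mult_smult_right)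
        then show ?thesis by blast
      next
        case False
        define w where "w = 1 / cnj z"
        have w0: "w \<noteq> 0" using z0 unfolding w_def by simp
        have iw: "1 / cnj w = z" unfolding w_def by simp
        have "poly T w = poly (rpoly (2 * Suc e) T) w" using sym by simp
        also have "\<dots> = 0" using poly_rpoly_gen[OF Suc.prems(1) w0] iw rz by simp
        finally have Tw: "poly T w = 0" .
        have "r dvd T" using rz poly_eq_0_iff_dvd r_def by blast
        then obtain T2 where T2: "T = r * T2" by (elim dvdE)
        have "w \<noteq> z"
        proof
          assume "w = z"
          then have "z * cnj z = 1" unfolding w_def using z0 by (simp add: field_simps)
          then have "cmod z ^ 2 = 1" using complex_norm_square[of z] by (metis of_real_eq_1_iff)
          then show False using False norm_ge_zero[of z] by (auto simp: power2_eq_1_iff)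
        qed
        then have "poly T2 w = 0" using Tw unfolding T2 r_def by simp
        then have "[:- w, 1:] dvd T2" using poly_eq_0_iff_dvd by blast
        then obtain S2 where S2: "T2 = [:- w, 1:] * S2" by (elim dvdE)
        have "[:- w, 1:] = smult (- 1 / cnj z) (rpoly 1 r)" by (simp only: Rr) (simp add: w_def z0)
        then have "T = B * smult (- 1 / cnj z) S2" unfolding T2 S2 B_def
          by (metis mult.assoc mult_smult_left mult_smult_right)
        then show ?thesis by blast
      qed
      then obtain S where TS: "T = B * S" by blast
      have dR: "degree (rpoly 1 r) = 1" unfolding Rr using z0 by simp
      have Bn0: "B \<noteq> 0" and Sn0: "S \<noteq> 0" using TS Tn0 by auto
      have dB: "degree B = 2" unfolding B_def using dr dR
        by (subst degree_mult_eq) (auto simp: r_def)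
      have dS: "degree S \<le> 2 * e" using degT TS degree_mult_eq[OF Bn0 Sn0] dB by simp
      have Bx: "poly B x = x * complex_of_real ((cmod (x - z))^2)" if x: "cmod x = 1" for x
      proof -
        have e: "poly (rpoly 1 r) x = x ^ 1 * cnj (poly r x)"
          using poly_rpoly[of r 1 x] x dr by simp
        have "poly B x = (x - z) * (x ^ 1 * cnj (x - z))"
          unfolding B_def poly_mult e by (simp add: r_def)
        also have "\<dots> = x * ((x - z) * cnj (x - z))" by (simp add: algebra_simps)
        also have "\<dots> = x * complex_of_real ((cmod (x - z))^2)" by (simp only: complex_norm_square)
        finally show ?thesis .
      qed
      have gS0: "nn (poly S x / x ^ e)" if x: "cmod x = 1" and xz: "x \<noteq> z" for x
      proof -
        have x0: "x \<noteq> 0" using x by auto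
        have pos: "cmod (x - z) > 0" using xz by simp
        have "nn (poly T x / x ^ Suc e)" using Suc.prems(2) x unfolding good_def by blast
        moreover have "poly T x / x ^ Suc e = complex_of_real ((cmod (x - z))^2) * (poly S x / x ^ e)"
          using TS Bx[OF x] x0 by (simp add: field_simps)
        ultimately show ?thesis using nn_scale[of "(cmod (x - z))^2"] pos by simp
      qed
      have gS: "good e S" unfolding good_def
      proof (intro allI impI)
        fix x :: complex assume x: "cmod x = 1"
        show "nn (poly S x / x ^ e)"
        proof (cases "x = z")
          case True
          then show ?thesis using nn_limit[of z S e] gS0 x by blast
        qed (use gS0 x in blast)
      qed
      obtain s where s: "degree s \<le> e" "S = s * rpoly e s" using Suc.IH[OF dS gS] by blast
      have "rpoly (Suc e) (r * s) = rpoly 1 r * rpoly e s"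
        using rpoly_mult[of r 1 s e] dr s(1) by simp
      then have "T = (r * s) * rpoly (Suc e) (r * s)"
        unfolding TS B_def s(2) by (simp add: algebra_simps)
      moreover have "degree (r * s) \<le> Suc e"
        using degree_mult_le[of r s] dr s(1) by simp
      ultimately show ?thesis by blast
    qed
  qed
qed

lemma complement:
  fixes p :: "complex poly"
  assumes dp: "degree p \<le> d" and b: "\<And>x. cmod x = 1 \<Longrightarrow> cmod (poly p x) \<le> 1"
  shows "\<exists>q. degree q \<le> d \<and> (\<forall>x. cmod x = 1 \<longrightarrow> (cmod (poly p x))^2 + (cmod (poly q x))^2 = 1)"
proof -
  define T where "T = monom 1 d - p * rpoly d p"
  have dT: "degree T \<le> 2 * d"
  proof -
    have "degree (monom (1::complex) d) \<le> 2 * d" using degree_monom_le[of "1::complex" d] by simp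
    moreover have "degree (p * rpoly d p) \<le> 2 * d"
      using degree_mult_le[of p "rpoly d p"] dp degree_rpoly[of d p] by simp
    ultimately show ?thesis unfolding T_def using degree_diff_le by blast
  qed
  have Tx: "poly T x = x ^ d * complex_of_real (1 - (cmod (poly p x))^2)" if x: "cmod x = 1" for x
  proof -
    have "poly T x = x ^ d - poly p x * (x ^ d * cnj (poly p x))"
      unfolding T_def using poly_rpoly[OF dp x] by (simp add: poly_monom)
    also have "\<dots> = x ^ d * (1 - poly p x * cnj (poly p x))" by (simp add: algebra_simps)
    also have "\<dots> = x ^ d * complex_of_real (1 - (cmod (poly p x))^2)"
      by (simp only: complex_norm_square of_real_diff of_real_1)
    finally show ?thesis .
  qed
  have gT: "good d T" unfolding good_def
  proof (intro allI impI)
    fix x :: complex assume x: "cmod x = 1"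
    then have x0: "x \<noteq> 0" by auto
    have "(cmod (poly p x))^2 \<le> 1" using b[OF x] by (simp add: power_le_one)
    then show "nn (poly T x / x ^ d)" unfolding Tx[OF x] nn_def using x0 by simp
  qed
  obtain q where q: "degree q \<le> d" "T = q * rpoly d q" using FR[OF dT gT] by blast
  have "(cmod (poly p x))^2 + (cmod (poly q x))^2 = 1" if x: "cmod x = 1" for x
  proof -
    have x0: "x \<noteq> 0" using x by auto
    have "poly T x = poly q x * (x ^ d * cnj (poly q x))" using q poly_rpoly[OF q(1) x] by simp
    also have "\<dots> = x ^ d * complex_of_real ((cmod (poly q x))^2)"
      by (simp only: complex_norm_square) (simp add: algebra_simps)
    finally have "complex_of_real (1 - (cmod (poly p x))^2) = complex_of_real ((cmod (poly q x))^2)"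
      using Tx[OF x] x0 by simp
    then show ?thesis by (simp only: of_real_eq_iff)
  qed
  then show ?thesis using q(1) by blast
qed

lemma coeff_mult_top:
  fixes a b :: "'a::comm_semiring_1 poly"
  assumes "degree a \<le> m" "degree b \<le> n"
  shows "coeff (a * b) (m + n) = coeff a m * coeff b n"
proof -
  have "coeff (a * b) (m + n) = (\<Sum>i\<le>m+n. coeff a i * coeff b (m + n - i))" by (rule coeff_mult)
  also have "\<dots> = (\<Sum>i\<in>{m}. coeff a i * coeff b (m + n - i))"
  proof (rule sum.mono_neutral_right)
    show "\<forall>i\<in>{..m + n} - {m}. coeff a i * coeff b (m + n - i) = 0"
    proof
      fix i assume "i \<in> {..m + n} - {m}"
      then have "i < m \<or> i > m" by auto
      then show "coeff a i * coeff b (m + n - i) = 0"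
        using assms by (auto simp: coeff_eq_0)
    qed
  qed auto
  finally show ?thesis by simp
qed

lemma deg_drop:
  assumes "degree (r::'a::zero poly) \<le> Suc d" "coeff r (Suc d) = 0"
  shows "degree r \<le> d"
proof (rule ccontr)
  assume "\<not> degree r \<le> d"
  then have "degree r = Suc d" using assms by simp
  then have "r = 0" using assms(2) by (metis leading_coeff_0_iff)
  then show False using \<open>degree r = Suc d\<close> by simp
qed

definition Em :: "complex \<times> complex \<Rightarrow> nat \<Rightarrow> nat \<Rightarrow> complex" where
  "Em e i j = (if i = 0 then (if j = 0 then fst e else - cnj (snd e)) else (if j = 0 then snd e else cnj (fst e)))"

definition Dm :: "complex \<Rightarrow> nat \<Rightarrow> nat \<Rightarrow> complex" where
  "Dm x i j = (if i = j then (if i = 0 then 1 else x) else 0)"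

definition m2 :: "(nat \<Rightarrow> nat \<Rightarrow> complex) \<Rightarrow> (nat \<Rightarrow> nat \<Rightarrow> complex) \<Rightarrow> nat \<Rightarrow> nat \<Rightarrow> complex" where
  "m2 A B i j = A i 0 * B 0 j + A i 1 * B 1 j"

fun qsp :: "complex \<times> complex \<Rightarrow> (complex \<times> complex) list \<Rightarrow> complex \<Rightarrow> nat \<Rightarrow> nat \<Rightarrow> complex" where
  "qsp e [] x = Em e"
| "qsp e (f # fs) x = m2 (m2 (Em e) (Dm x)) (qsp f fs x)"

definition unit2 :: "complex \<times> complex \<Rightarrow> bool" where
  "unit2 e \<longleftrightarrow> (cmod (fst e))^2 + (cmod (snd e))^2 = 1"

lemma unit2_c: "unit2 (a, b) \<Longrightarrow> a * cnj a + b * cnj b = 1"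
  unfolding unit2_def by (metis complex_norm_square fst_conv snd_conv of_real_add of_real_1)

lemma rot_norm:
  "(cmod (cnj a * P + cnj b * Q))^2 + (cmod (- b * P + a * Q))^2
   = ((cmod a)^2 + (cmod b)^2) * ((cmod P)^2 + (cmod Q)^2)"
proof -
  have "complex_of_real ((cmod (cnj a * P + cnj b * Q))^2 + (cmod (- b * P + a * Q))^2)
      = complex_of_real (((cmod a)^2 + (cmod b)^2) * ((cmod P)^2 + (cmod Q)^2))"
    by (simp only: of_real_add of_real_mult complex_norm_square) (simp add: algebra_simps)
  then show ?thesis by (simp only: of_real_eq_iff)
qed

lemma qsp_step:
  fixes p q :: "complex poly"
  assumes IH: "\<And>p q :: complex poly. degree p \<le> d \<Longrightarrow> degree q \<le> d \<Longrightarrow>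
      (\<forall>x. cmod x = 1 \<longrightarrow> (cmod (poly p x))^2 + (cmod (poly q x))^2 = 1) \<Longrightarrow>
      \<exists>e fs. length fs = d \<and> unit2 e \<and> (\<forall>f\<in>set fs. unit2 f) \<and>
        (\<forall>x. qsp e fs x 0 0 = poly p x \<and> qsp e fs x 1 0 = poly q x)"
    and dp: "degree p \<le> Suc d" and dq: "degree q \<le> Suc d"
    and un: "\<forall>x. cmod x = 1 \<longrightarrow> (cmod (poly p x))^2 + (cmod (poly q x))^2 = 1"
    and ab: "unit2 (a, b)"
    and C1: "cnj a * coeff p (Suc d) + cnj b * coeff q (Suc d) = 0"
    and C2: "- b * coeff p 0 + a * coeff q 0 = 0"
  shows "\<exists>e fs. length fs = Suc d \<and> unit2 e \<and> (\<forall>f\<in>set fs. unit2 f) \<and>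
        (\<forall>x. qsp e fs x 0 0 = poly p x \<and> qsp e fs x 1 0 = poly q x)"
proof -
  define p' where "p' = smult (cnj a) p + smult (cnj b) q"
  define q'' where "q'' = smult (- b) p + smult a q"
  have "degree p' \<le> Suc d" unfolding p'_def using dp dq
    by (meson degree_add_le degree_smult_le order.trans)
  moreover have "coeff p' (Suc d) = 0" unfolding p'_def using C1 by simp
  ultimately have dp': "degree p' \<le> d" by (rule deg_drop)
  have dq'': "degree q'' \<le> Suc d" unfolding q''_def using dp dq
    by (meson degree_add_le degree_smult_le order.trans)
  obtain c t where ct: "q'' = pCons c t" by (rule pCons_cases)
  have "c = coeff q'' 0" using ct by simp
  also have "\<dots> = 0" unfolding q''_def using C2 by simp
  finally have c0: "c = 0" .
  have dt: "degree t \<le> d"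
  proof (cases "t = 0")
    case False
    then show ?thesis using dq'' ct degree_pCons_eq by fastforce
  qed simp
  have ut: "\<forall>x. cmod x = 1 \<longrightarrow> (cmod (poly p' x))^2 + (cmod (poly t x))^2 = 1"
  proof (intro allI impI)
    fix x :: complex assume x: "cmod x = 1"
    have "cmod (poly q'' x) = cmod (poly t x)" using ct c0 x by (simp add: norm_mult)
    moreover have "(cmod (poly p' x))^2 + (cmod (poly q'' x))^2 = 1"
      unfolding p'_def q''_def using rot_norm[of a "poly p x" b "poly q x"] ab un x
      unfolding unit2_def by simp
    ultimately show "(cmod (poly p' x))^2 + (cmod (poly t x))^2 = 1" by simp
  qed
  obtain e0 fs0 where R: "length fs0 = d" "unit2 e0" "\<forall>f\<in>set fs0. unit2 f"
      "\<forall>x. qsp e0 fs0 x 0 0 = poly p' x \<and> qsp e0 fs0 x 1 0 = poly t x"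
    using IH[OF dp' dt ut] by blast
  have abc: "a * cnj a + b * cnj b = 1" by (rule unit2_c[OF ab])
  have "qsp (a, b) (e0 # fs0) x 0 0 = poly p x \<and> qsp (a, b) (e0 # fs0) x 1 0 = poly q x" for x
  proof -
    have qx: "x * poly t x = poly q'' x" using ct c0 by simp
    have A: "qsp (a, b) (e0 # fs0) x i 0 = Em (a, b) i 0 * poly p' x + Em (a, b) i 1 * poly q'' x" for i
      using R(4) qx by (simp add: m2_def Dm_def algebra_simps)
    have "qsp (a, b) (e0 # fs0) x 0 0 = (a * cnj a + b * cnj b) * poly p x"
      unfolding A by (simp add: Em_def p'_def q''_def algebra_simps)
    moreover have "qsp (a, b) (e0 # fs0) x 1 0 = (a * cnj a + b * cnj b) * poly q x"
      unfolding A by (simp add: Em_def p'_def q''_def algebra_simps)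
    ultimately show ?thesis using abc by simp
  qed
  then show ?thesis using R ab by (intro exI[of _ "(a, b)"] exI[of _ "e0 # fs0"]) auto
qed

lemma qsp_exists:
  "degree p \<le> d \<Longrightarrow> degree q \<le> d \<Longrightarrow>
   (\<forall>x. cmod x = 1 \<longrightarrow> (cmod (poly p x))^2 + (cmod (poly q x))^2 = 1) \<Longrightarrow>
   \<exists>e fs. length fs = d \<and> unit2 e \<and> (\<forall>f\<in>set fs. unit2 f) \<and>
        (\<forall>x. qsp e fs x 0 0 = poly p x \<and> qsp e fs x 1 0 = poly q x)"
proof (induction d arbitrary: p q)
  case 0
  then have P: "p = [:coeff p 0:]" and Q: "q = [:coeff q 0:]" using degree0_const by auto
  have "poly p 1 = coeff p 0" by (subst P) simp
  moreover have "poly q 1 = coeff q 0" by (subst Q) simp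
  ultimately have u: "unit2 (coeff p 0, coeff q 0)" using "0.prems"(3) unfolding unit2_def by (metis fst_conv snd_conv norm_one)
  have "poly p x = coeff p 0" for x by (subst P) simp
  moreover have "poly q x = coeff q 0" for x by (subst Q) simp
  ultimately show ?case using u
    by (intro exI[of _ "(coeff p 0, coeff q 0)"] exI[of _ "[]"]) (auto simp: Em_def)
next
  case (Suc d p q)
  define P0 where "P0 = coeff p 0"
  define Q0 where "Q0 = coeff q 0"
  define P1 where "P1 = coeff p (Suc d)"
  define Q1 where "Q1 = coeff q (Suc d)"
  define F where "F = p * rpoly (Suc d) p + q * rpoly (Suc d) q - monom 1 (Suc d)"
  have "F = 0"
  proof (rule poly_eq_circle)
    fix x :: complex assume x: "cmod x = 1"
    have "poly F x = x ^ Suc d * (poly p x * cnj (poly p x) + poly q x * cnj (poly q x)) - x ^ Suc d"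
      unfolding F_def using poly_rpoly[OF Suc.prems(1) x] poly_rpoly[OF Suc.prems(2) x]
      by (simp add: poly_monom algebra_simps)
    also have "poly p x * cnj (poly p x) + poly q x * cnj (poly q x) = 1"
      using Suc.prems(3) x by (simp only: complex_norm_square[symmetric] of_real_add[symmetric]) simp
    finally show "poly F x = poly 0 x" by simp
  qed
  then have "coeff F (Suc d + Suc d) = 0" by simp
  moreover have "coeff F (Suc d + Suc d) = P1 * cnj P0 + Q1 * cnj Q0"
  proof -
    have a: "coeff (p * rpoly (Suc d) p) (Suc d + Suc d) = P1 * cnj P0"
      using coeff_mult_top[OF Suc.prems(1) degree_rpoly[of "Suc d" p]] coeff_rpoly[of "Suc d" "Suc d" p]
      unfolding P1_def P0_def by simp
    have b: "coeff (q * rpoly (Suc d) q) (Suc d + Suc d) = Q1 * cnj Q0"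
      using coeff_mult_top[OF Suc.prems(2) degree_rpoly[of "Suc d" q]] coeff_rpoly[of "Suc d" "Suc d" q]
      unfolding Q1_def Q0_def by simp
    have c: "coeff (monom (1::complex) (Suc d)) (Suc d + Suc d) = 0" by (simp add: coeff_monom)
    show ?thesis unfolding F_def coeff_diff coeff_add a b c by simp
  qed
  ultimately have key: "cnj P0 * P1 + cnj Q0 * Q1 = 0" by (simp add: algebra_simps)
  obtain u1 u2 where u0: "(u1, u2) \<noteq> (0, 0)" and C1u: "cnj u1 * P1 + cnj u2 * Q1 = 0"
      and C2u: "- u2 * P0 + u1 * Q0 = 0"
  proof (cases "(P0, Q0) \<noteq> (0, 0)")
    case True
    show ?thesis by (rule that[of P0 Q0]) (use True key in \<open>auto simp: algebra_simps\<close>)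
  next
    case F1: False
    show ?thesis
    proof (cases "(P1, Q1) \<noteq> (0, 0)")
      case True
      show ?thesis by (rule that[of "- cnj Q1" "cnj P1"]) (use True F1 in \<open>auto simp: algebra_simps\<close>)
    next
      case False
      show ?thesis by (rule that[of 1 0]) (use False F1 in auto)
    qed
  qed
  define nu where "nu = sqrt ((cmod u1)^2 + (cmod u2)^2)"
  have pos: "(cmod u1)^2 + (cmod u2)^2 > 0" using u0 by (auto simp: add_pos_pos sum_power2_gt_zero_iff)
  then have nu0: "nu > 0" unfolding nu_def by simp
  define a where "a = u1 / complex_of_real nu"
  define b where "b = u2 / complex_of_real nu"
  have e1: "(cmod a)^2 + (cmod b)^2 = ((cmod u1)^2 + (cmod u2)^2) / nu^2"
    unfolding a_def b_def using nu0 by (simp add: norm_divide power_divide add_divide_distrib)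
  have e2: "nu^2 = (cmod u1)^2 + (cmod u2)^2" unfolding nu_def using pos by simp
  have "unit2 (a, b)" unfolding unit2_def using e1 e2 pos u0 by simp
  moreover have "cnj a * coeff p (Suc d) + cnj b * coeff q (Suc d) = 0"
    using C1u nu0 unfolding a_def b_def P1_def Q1_def by (simp add: field_simps)
  moreover have "- b * coeff p 0 + a * coeff q 0 = 0"
    using C2u nu0 unfolding a_def b_def P0_def Q0_def by (simp add: field_simps)
  ultimately show ?case using qsp_step[OF Suc.IH Suc.prems] by blast
qed



lemma qbit_bit: "qbit r q = (if bit r q then 1 else 0)"
  unfolding qbit_def bit_iff_odd by (auto simp: odd_iff_mod_2_eq_one)

lemma qbit_le1: "qbit r q \<le> 1"
  unfolding qbit_bit by auto

lemma qbit_mod: "q < n \<Longrightarrow> qbit (r mod 2 ^ n) q = qbit r q"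
  unfolding qbit_bit by (simp add: take_bit_eq_mod[symmetric] bit_take_bit_iff)

lemma bits_eq_mod: "(\<forall>q<n. qbit r q = qbit s q) \<longleftrightarrow> r mod 2 ^ n = s mod 2 ^ n"
proof
  assume h: "\<forall>q<n. qbit r q = qbit s q"
  have "\<forall>m. bit (take_bit n r) m = bit (take_bit n s) m"
    using h unfolding bit_take_bit_iff qbit_bit by (metis one_neq_zero)
  then have "take_bit n r = take_bit n s" by (simp add: bit_eq_iff)
  then show "r mod 2 ^ n = s mod 2 ^ n" by (simp add: take_bit_eq_mod)
next
  assume "r mod 2 ^ n = s mod 2 ^ n"
  then show "\<forall>q<n. qbit r q = qbit s q" using qbit_mod by metis
qed

lemma qbit_top: "r < 2 * 2 ^ n \<Longrightarrow> qbit r n = r div 2 ^ n"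
proof -
  assume "r < 2 * 2 ^ n"
  then have "r div 2 ^ n < 2" by (simp add: div_less_iff_less_mult mult.commute)
  then show ?thesis unfolding qbit_def by simp
qed

lemma mod_sum_bits: "r mod 2 ^ n = (\<Sum>q<n. qbit r q * 2 ^ q)"
proof (induction n)
  case (Suc n)
  have "r mod 2 ^ Suc n = 2 ^ n * (r div 2 ^ n mod 2) + r mod 2 ^ n"
    using mod_mult2_eq[of r "2 ^ n" 2] by (simp add: mult.commute)
  then show ?case using Suc by (simp add: qbit_def)
qed simp

lemma sum_bits_lt:
  assumes "\<And>t. f t \<le> (1::nat)"
  shows "(\<Sum>t<L. f t * 2 ^ t) < 2 ^ L"
proof (induction L)
  case 0
  show ?case by simp
next
  case (Suc L)
  have a: "f L * 2 ^ L \<le> 2 ^ L" using assms[of L] by simp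
  have "(\<Sum>t<Suc L. f t * 2 ^ t) = (\<Sum>t<L. f t * 2 ^ t) + f L * 2 ^ L" by simp
  also have "\<dots> < 2 ^ L + 2 ^ L" using Suc.IH a by linarith
  finally show ?case by simp
qed

lemma loc_index_lt: "loc_index qs r < 2 ^ length qs"
  unfolding loc_index_def by (rule sum_bits_lt) (rule qbit_le1)

lemma loc_index_mod:
  assumes "set qs \<subseteq> {..<n}"
  shows "loc_index qs (r mod 2 ^ n) = loc_index qs r"
  unfolding loc_index_def
  by (rule sum.cong[OF refl]) (metis assms lessThan_iff nth_mem qbit_mod subsetD)

lemma loc_index_1: "loc_index [a] r = qbit r a"
  unfolding loc_index_def by simp

lemma loc_index_2: "loc_index [a, b] r = qbit r a + 2 * qbit r b"
  unfolding loc_index_def by (simp add: numeral_2_eq_2)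

definition dg :: "nat \<Rightarrow> (nat \<Rightarrow> complex) \<Rightarrow> complex mat" where
  "dg m f = mat m m (\<lambda>(i, j). if i = j then f i else 0)"

lemma dg_carrier[simp]: "dg m f \<in> carrier_mat m m"
  unfolding dg_def by simp

lemma dg_dim[simp]: "dim_row (dg m f) = m" "dim_col (dg m f) = m"
  unfolding dg_def by simp_all

lemma dg_index[simp]: "i < m \<Longrightarrow> j < m \<Longrightarrow> dg m f $$ (i, j) = (if i = j then f i else 0)"
  unfolding dg_def by simp

lemma dg_mult: "dg m f * dg m g = dg m (\<lambda>i. f i * g i)"
proof (rule eq_matI)
  fix i j assume ij: "i < dim_row (dg m (\<lambda>i. f i * g i))" "j < dim_col (dg m (\<lambda>i. f i * g i))"
  then have "(dg m f * dg m g) $$ (i, j) = (\<Sum>k<m. dg m f $$ (i, k) * dg m g $$ (k, j))"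
    by (simp add: times_mat_def scalar_prod_def lessThan_atLeast0 col_def row_def)
  also have "\<dots> = (\<Sum>k\<in>{i}. dg m f $$ (i, k) * dg m g $$ (k, j))"
    by (rule sum.mono_neutral_right) (use ij in auto)
  finally show "(dg m f * dg m g) $$ (i, j) = dg m (\<lambda>i. f i * g i) $$ (i, j)" using ij by simp
qed auto

lemma dg_add: "dg m f + dg m g = dg m (\<lambda>i. f i + g i)"
  by (rule eq_matI) auto

lemma dg_zero: "dg m (\<lambda>i. 0) = 0\<^sub>m m m"
  by (rule eq_matI) auto

lemma dg_one: "dg m (\<lambda>i. 1) = 1\<^sub>m m"
  by (rule eq_matI) auto

lemma dg_smult: "c \<cdot>\<^sub>m dg m f = dg m (\<lambda>i. c * f i)"
  by (rule eq_matI) auto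

definition bd :: "nat \<Rightarrow> (nat \<Rightarrow> nat \<Rightarrow> nat \<Rightarrow> complex) \<Rightarrow> complex mat" where
  "bd N W = four_block_mat (dg N (\<lambda>j. W j 0 0)) (dg N (\<lambda>j. W j 0 1)) (dg N (\<lambda>j. W j 1 0)) (dg N (\<lambda>j. W j 1 1))"

lemma bd_carrier[simp]: "bd N W \<in> carrier_mat (N + N) (N + N)"
  unfolding bd_def by simp

lemma bd_mult: "bd N W * bd N V = bd N (\<lambda>j a b. W j a 0 * V j 0 b + W j a 1 * V j 1 b)"
  unfolding bd_def
  by (subst mult_four_block_mat[of _ N N _ N _ N _ _ N _ N]) (simp_all add: dg_mult dg_add)

lemma bd_index:
  assumes "i < 2 * 2 ^ n" "j < 2 * 2 ^ n"
  shows "bd (2 ^ n) W $$ (i, j) =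
    (if i mod 2 ^ n = j mod 2 ^ n then W (i mod 2 ^ n) (i div 2 ^ n) (j div 2 ^ n) else 0)"
proof -
  let ?N = "2 ^ n :: nat"
  have i2: "i < ?N + ?N" and j2: "j < ?N + ?N" using assms by simp_all
  have e: "bd ?N W $$ (i, j) = (if i < ?N then
      if j < ?N then dg ?N (\<lambda>j. W j 0 0) $$ (i,j) else dg ?N (\<lambda>j. W j 0 1) $$ (i,j - ?N)
      else if j < ?N then dg ?N (\<lambda>j. W j 1 0) $$ (i - ?N, j) else dg ?N (\<lambda>j. W j 1 1) $$ (i - ?N, j - ?N))"
    unfolding bd_def using index_mat_four_block(1)[of i "dg ?N (\<lambda>j. W j 0 0)" "dg ?N (\<lambda>j. W j 1 1)" j] i2 j2
    by simp
  show ?thesis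
  proof (cases "i < ?N")
    case True
    then have im: "i mod ?N = i" "i div ?N = 0" by simp_all
    show ?thesis
    proof (cases "j < ?N")
      case True
      then have "j mod ?N = j" "j div ?N = 0" by simp_all
      then show ?thesis unfolding e using \<open>i < ?N\<close> True im by simp
    next
      case False
      then have jm: "j mod ?N = j - ?N" "j div ?N = 1" "j - ?N < ?N" using j2 by (simp_all add: le_mod_geq div_if)
      then show ?thesis unfolding e using \<open>i < ?N\<close> False im by auto
    qed
  next
    case False
    then have im: "i mod ?N = i - ?N" "i div ?N = 1" "i - ?N < ?N" using i2 by (simp_all add: le_mod_geq div_if)
    show ?thesis
    proof (cases "j < ?N")
      case True
      then have "j mod ?N = j" "j div ?N = 0" by simp_all
      then show ?thesis unfolding e using \<open>\<not> i < ?N\<close> True im by auto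
    next
      case False
      then have jm: "j mod ?N = j - ?N" "j div ?N = 1" "j - ?N < ?N" using j2 by (simp_all add: le_mod_geq div_if)
      then show ?thesis unfolding e using \<open>\<not> i < ?N\<close> False im by auto
    qed
  qed
qed

lemma fb_index:
  assumes "i < 2 * 2 ^ n" "j < 2 * 2 ^ n" "A \<in> carrier_mat (2 ^ n) (2 ^ n)"
  shows "four_block_mat A (0\<^sub>m (2 ^ n) (2 ^ n)) (0\<^sub>m (2 ^ n) (2 ^ n)) A $$ (i, j) =
    (if i div 2 ^ n = j div 2 ^ n then A $$ (i mod 2 ^ n, j mod 2 ^ n) else 0)"
proof -
  let ?N = "2 ^ n :: nat"
  have i2: "i < ?N + ?N" and j2: "j < ?N + ?N" using assms by simp_all
  have dA: "dim_row A = ?N" "dim_col A = ?N" using assms(3) by auto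
  have e: "four_block_mat A (0\<^sub>m ?N ?N) (0\<^sub>m ?N ?N) A $$ (i, j) = (if i < ?N then
      if j < ?N then A $$ (i,j) else 0\<^sub>m ?N ?N $$ (i,j - ?N)
      else if j < ?N then 0\<^sub>m ?N ?N $$ (i - ?N, j) else A $$ (i - ?N, j - ?N))"
    using index_mat_four_block(1)[of i A A j "0\<^sub>m ?N ?N" "0\<^sub>m ?N ?N"] i2 j2 dA by simp
  show ?thesis
  proof (cases "i < ?N")
    case True
    then have im: "i mod ?N = i" "i div ?N = 0" by simp_all
    show ?thesis
    proof (cases "j < ?N")
      case True
      then have "j mod ?N = j" "j div ?N = 0" by simp_all
      then show ?thesis unfolding e using \<open>i < ?N\<close> True im by simp
    next
      case False
      then have jm: "j mod ?N = j - ?N" "j div ?N = 1" "j - ?N < ?N" using j2 by (simp_all add: le_mod_geq div_if)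
      then show ?thesis unfolding e using \<open>i < ?N\<close> False im by auto
    qed
  next
    case False
    then have im: "i mod ?N = i - ?N" "i div ?N = 1" "i - ?N < ?N" using i2 by (simp_all add: le_mod_geq div_if)
    show ?thesis
    proof (cases "j < ?N")
      case True
      then have "j mod ?N = j" "j div ?N = 0" by simp_all
      then show ?thesis unfolding e using \<open>\<not> i < ?N\<close> True im by auto
    next
      case False
      then have jm: "j mod ?N = j - ?N" "j div ?N = 1" "j - ?N < ?N" using j2 by (simp_all add: le_mod_geq div_if)
      then show ?thesis unfolding e using \<open>\<not> i < ?N\<close> False im by auto
    qed
  qed
qed

lemma embed_carrier[simp]: "embed_gate m g \<in> carrier_mat (2 ^ m) (2 ^ m)"
  unfolding embed_gate_def by (cases g) simp

lemma embed_dim[simp]: "dim_row (embed_gate m g) = 2 ^ m" "dim_col (embed_gate m g) = 2 ^ m"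
  using embed_carrier[of m g] by (metis carrier_matD(1), metis carrier_matD(2))

lemma embed_index:
  "r < 2 ^ m \<Longrightarrow> s < 2 ^ m \<Longrightarrow> embed_gate m (qs, G) $$ (r, s) =
    (if (\<forall>q<m. q \<notin> set qs \<longrightarrow> qbit r q = qbit s q) then G $$ (loc_index qs r, loc_index qs s) else 0)"
  unfolding embed_gate_def by simp

lemma embed_lift:
  assumes v: "valid_gate n (qs, G)"
  shows "embed_gate (Suc n) (qs, G) =
    four_block_mat (embed_gate n (qs, G)) (0\<^sub>m (2 ^ n) (2 ^ n)) (0\<^sub>m (2 ^ n) (2 ^ n)) (embed_gate n (qs, G))"
proof (rule eq_matI)
  let ?N = "2 ^ n :: nat"
  have sq: "set qs \<subseteq> {..<n}" using v unfolding valid_gate_def by simp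
  fix i j assume "i < dim_row (four_block_mat (embed_gate n (qs, G)) (0\<^sub>m ?N ?N) (0\<^sub>m ?N ?N) (embed_gate n (qs, G)))"
    "j < dim_col (four_block_mat (embed_gate n (qs, G)) (0\<^sub>m ?N ?N) (0\<^sub>m ?N ?N) (embed_gate n (qs, G)))"
  then have i: "i < 2 * ?N" and j: "j < 2 * ?N" by simp_all
  have nq: "n \<notin> set qs" using sq by auto
  have c: "(\<forall>q<Suc n. q \<notin> set qs \<longrightarrow> qbit i q = qbit j q) \<longleftrightarrow>
        (i div ?N = j div ?N \<and> (\<forall>q<n. q \<notin> set qs \<longrightarrow> qbit (i mod ?N) q = qbit (j mod ?N) q))"
    using nq qbit_top[OF i] qbit_top[OF j] qbit_mod[of _ n i] qbit_mod[of _ n j]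
    by (auto simp: less_Suc_eq)
  have l: "loc_index qs (i mod ?N) = loc_index qs i" "loc_index qs (j mod ?N) = loc_index qs j"
    using loc_index_mod[OF sq] by auto
  show "embed_gate (Suc n) (qs, G) $$ (i, j) =
    four_block_mat (embed_gate n (qs, G)) (0\<^sub>m ?N ?N) (0\<^sub>m ?N ?N) (embed_gate n (qs, G)) $$ (i, j)"
    unfolding fb_index[OF i j embed_carrier] using i j
    by (auto simp: embed_index c l)
qed auto

lemma embed_anc:
  "embed_gate (Suc n) ([n], mat 2 2 (\<lambda>(a, b). E a b)) = bd (2 ^ n) (\<lambda>j. E)"
proof (rule eq_matI)
  let ?N = "2 ^ n :: nat"
  fix i j assume "i < dim_row (bd ?N (\<lambda>j. E))" "j < dim_col (bd ?N (\<lambda>j. E))"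
  then have i: "i < 2 * ?N" and j: "j < 2 * ?N" using bd_carrier[of ?N "\<lambda>j. E"] by auto
  have c: "(\<forall>q<Suc n. q \<noteq> n \<longrightarrow> qbit i q = qbit j q) \<longleftrightarrow> i mod ?N = j mod ?N"
    using bits_eq_mod[of n i j] by (auto simp: less_Suc_eq)
  have d: "i div ?N < 2" "j div ?N < 2" using i j by (auto simp: div_less_iff_less_mult mult.commute)
  show "embed_gate (Suc n) ([n], mat 2 2 (\<lambda>(a, b). E a b)) $$ (i, j) = bd ?N (\<lambda>j. E) $$ (i, j)"
    unfolding bd_index[OF i j] using i j d
    by (simp add: embed_index c loc_index_1 qbit_top)
qed (auto simp: bd_carrier[THEN carrier_matD(1)] bd_carrier[THEN carrier_matD(2)])

definition cpm :: "complex \<Rightarrow> complex mat" where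
  "cpm ph = dg 4 (\<lambda>a. if a = 3 then ph else 1)"

lemma embed_cp:
  assumes q: "q < n"
  shows "embed_gate (Suc n) ([q, n], cpm ph) = dg (2 ^ Suc n) (\<lambda>r. if qbit r q = 1 \<and> qbit r n = 1 then ph else 1)"
proof (rule eq_matI)
  fix i j assume "i < dim_row (dg (2 ^ Suc n) (\<lambda>r. if qbit r q = 1 \<and> qbit r n = 1 then ph else 1))"
     "j < dim_col (dg (2 ^ Suc n) (\<lambda>r. if qbit r q = 1 \<and> qbit r n = 1 then ph else 1))"
  then have i: "i < 2 ^ Suc n" and j: "j < 2 ^ Suc n" by simp_all
  have li: "loc_index [q, n] i < 4" "loc_index [q, n] j < 4"
    using loc_index_lt[of "[q, n]"] by simp_all
  have b: "qbit i q \<le> 1" "qbit j q \<le> 1" "qbit i n \<le> 1" "qbit j n \<le> 1" by (rule qbit_le1)+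
  have eqloc: "loc_index [q, n] i = loc_index [q, n] j \<longleftrightarrow> qbit i q = qbit j q \<and> qbit i n = qbit j n"
    unfolding loc_index_2 using b by presburger
  have three: "loc_index [q, n] i = 3 \<longleftrightarrow> qbit i q = 1 \<and> qbit i n = 1"
    unfolding loc_index_2 using b by presburger
  have all: "(\<forall>q'<Suc n. qbit i q' = qbit j q') \<longleftrightarrow> i = j"
    using bits_eq_mod[of "Suc n" i j] i j by simp
  have "embed_gate (Suc n) ([q, n], cpm ph) $$ (i, j) =
      (if i = j then (if qbit i q = 1 \<and> qbit i n = 1 then ph else 1) else 0)"
  proof (cases "i = j")
    case True
    then show ?thesis using i j li three by (simp add: embed_index cpm_def)
  next
    case False
    then have "\<not> ((\<forall>q'<Suc n. q' \<notin> set [q, n] \<longrightarrow> qbit i q' = qbit j q') \<and>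
       loc_index [q, n] i = loc_index [q, n] j)"
      using all eqloc q by auto
    then show ?thesis using i j li False by (auto simp: embed_index cpm_def)
  qed
  then show "embed_gate (Suc n) ([q, n], cpm ph) $$ (i, j) =
      dg (2 ^ Suc n) (\<lambda>r. if qbit r q = 1 \<and> qbit r n = 1 then ph else 1) $$ (i, j)"
    using i j by simp
qed auto

lemma circuit_carrier[simp]: "circuit_mat m gs \<in> carrier_mat (2 ^ m) (2 ^ m)"
  by (induction gs) (auto simp: circuit_mat_def)

lemma circuit_dim[simp]: "dim_row (circuit_mat m gs) = 2 ^ m" "dim_col (circuit_mat m gs) = 2 ^ m"
  using circuit_carrier[of m gs] by (metis carrier_matD(1), metis carrier_matD(2))

lemma circuit_Nil: "circuit_mat m [] = 1\<^sub>m (2 ^ m)"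
  by (simp add: circuit_mat_def)

lemma circuit_Cons: "circuit_mat m (g # gs) = embed_gate m g * circuit_mat m gs"
  by (simp add: circuit_mat_def)

lemma circuit_append: "circuit_mat m (xs @ ys) = circuit_mat m xs * circuit_mat m ys"
proof (induction xs)
  case Nil
  then show ?case by (simp add: circuit_Nil)
next
  case (Cons g xs)
  then show ?case
    by (simp add: circuit_Cons assoc_mult_mat[OF embed_carrier circuit_carrier circuit_carrier])
qed

lemma circuit_single: "circuit_mat m [g] = embed_gate m g"
  by (simp add: circuit_Cons circuit_Nil)

lemma circuit_lift:
  "(\<forall>g\<in>set gs. valid_gate n g) \<Longrightarrow> circuit_mat (Suc n) gs =
    four_block_mat (circuit_mat n gs) (0\<^sub>m (2 ^ n) (2 ^ n)) (0\<^sub>m (2 ^ n) (2 ^ n)) (circuit_mat n gs)"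
proof (induction gs)
  case Nil
  then show ?case using four_block_one_mat[of "2 ^ n" "2 ^ n"] by (simp add: circuit_Nil mult_2)
next
  case (Cons g gs)
  obtain qs G where g: "g = (qs, G)" by (cases g)
  have v: "valid_gate n (qs, G)" using Cons.prems g by simp
  let ?N = "2 ^ n :: nat"
  have "circuit_mat (Suc n) (g # gs) =
     four_block_mat (embed_gate n g) (0\<^sub>m ?N ?N) (0\<^sub>m ?N ?N) (embed_gate n g) *
     four_block_mat (circuit_mat n gs) (0\<^sub>m ?N ?N) (0\<^sub>m ?N ?N) (circuit_mat n gs)"
    using Cons embed_lift[OF v] g by (simp add: circuit_Cons)
  also have "\<dots> = four_block_mat (circuit_mat n (g # gs)) (0\<^sub>m ?N ?N) (0\<^sub>m ?N ?N) (circuit_mat n (g # gs))"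
    by (subst mult_four_block_mat[of _ ?N ?N _ ?N _ ?N _ _ ?N _ ?N])
      (auto simp: circuit_Cons mult_carrier_mat[OF embed_carrier circuit_carrier])
  finally show ?case .
qed

lemma circuit_cps:
  "k \<le> n \<Longrightarrow> circuit_mat (Suc n) (map (\<lambda>q. ([q, n], cpm (x ^ (2 ^ q)))) [0..<k]) =
    dg (2 ^ Suc n) (\<lambda>r. \<Prod>q<k. if qbit r q = 1 \<and> qbit r n = 1 then x ^ (2 ^ q) else 1)"
proof (induction k)
  case 0
  have "circuit_mat (Suc n) [] = dg (2 ^ Suc n) (\<lambda>r. 1)" by (simp only: dg_one circuit_Nil)
  then show ?case by simp
next
  case (Suc k)
  then have kn: "k < n" "k \<le> n" by simp_all
  have "circuit_mat (Suc n) (map (\<lambda>q. ([q, n], cpm (x ^ (2 ^ q)))) [0..<Suc k]) =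
     circuit_mat (Suc n) (map (\<lambda>q. ([q, n], cpm (x ^ (2 ^ q)))) [0..<k]) *
     circuit_mat (Suc n) [([k, n], cpm (x ^ (2 ^ k)))]"
    by (simp only: upt_Suc_append[OF le0] map_append list.map circuit_append)
  also have "\<dots> = dg (2 ^ Suc n) (\<lambda>r. \<Prod>q<k. if qbit r q = 1 \<and> qbit r n = 1 then x ^ (2 ^ q) else 1) *
     dg (2 ^ Suc n) (\<lambda>r. if qbit r k = 1 \<and> qbit r n = 1 then x ^ (2 ^ k) else 1)"
    by (simp only: Suc.IH[OF kn(2)] circuit_single embed_cp[OF kn(1)])
  also have "\<dots> = dg (2 ^ Suc n) (\<lambda>r. \<Prod>q<Suc k. if qbit r q = 1 \<and> qbit r n = 1 then x ^ (2 ^ q) else 1)"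
    by (simp only: dg_mult prod.lessThan_Suc)
  finally show ?case .
qed

lemma prod_bits:
  "(\<Prod>q<n. if qbit r q = 1 \<and> b then x ^ (2 ^ q) else 1) = (if b then x ^ (r mod 2 ^ n) else 1)"
proof (cases b)
  case True
  have "(\<Prod>q<n. if qbit r q = 1 then x ^ (2 ^ q) else 1) = (\<Prod>q<n. x ^ (qbit r q * 2 ^ q))"
    by (rule prod.cong[OF refl]) (simp add: qbit_bit)
  also have "\<dots> = x ^ (\<Sum>q<n. qbit r q * 2 ^ q)" by (simp add: power_sum)
  also have "\<dots> = x ^ (r mod 2 ^ n)" by (simp add: mod_sum_bits)
  finally show ?thesis using True by simp
qed simp

lemma circuit_ctrl:
  "circuit_mat (Suc n) (map (\<lambda>q. ([q, n], cpm (x ^ (2 ^ q)))) [0..<n]) =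
    bd (2 ^ n) (\<lambda>j a b. if a = b then (if a = 0 then 1 else x ^ j) else 0)"
proof (rule eq_matI)
  let ?N = "2 ^ n :: nat"
  let ?W = "\<lambda>j a b. if a = b then (if a = 0 then 1 else x ^ j) else (0::complex)"
  fix i j assume "i < dim_row (bd ?N ?W)" "j < dim_col (bd ?N ?W)"
  then have i: "i < 2 * ?N" and j: "j < 2 * ?N" using bd_carrier[of ?N ?W] by auto
  have d: "i div ?N < 2" "j div ?N < 2" using i j by (auto simp: div_less_iff_less_mult mult.commute)
  have ij: "i = j \<longleftrightarrow> i mod ?N = j mod ?N \<and> i div ?N = j div ?N"
    by (metis div_mult_mod_eq)
  show "circuit_mat (Suc n) (map (\<lambda>q. ([q, n], cpm (x ^ (2 ^ q)))) [0..<n]) $$ (i, j) = bd ?N ?W $$ (i, j)"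
    unfolding circuit_cps[OF order.refl] bd_index[OF i j] prod_bits
    using i j d ij by (auto simp: qbit_top)
qed (auto simp: bd_carrier[THEN carrier_matD(1)] bd_carrier[THEN carrier_matD(2)] mult_2)

lemma adj_carrier[simp]: "A \<in> carrier_mat m k \<Longrightarrow> adj A \<in> carrier_mat k m"
  unfolding adj_def by auto

lemma adj_dim[simp]: "dim_row (adj A) = dim_col A" "dim_col (adj A) = dim_row A"
  unfolding adj_def by auto

lemma adj_index[simp]: "i < dim_col A \<Longrightarrow> j < dim_row A \<Longrightarrow> adj A $$ (i, j) = cnj (A $$ (j, i))"
  unfolding adj_def by auto

lemma adj_adj: "adj (adj A) = A"
  by (rule eq_matI) auto

lemma adj_mult:
  assumes "A \<in> carrier_mat m k" "B \<in> carrier_mat k l"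
  shows "adj (A * B) = adj B * adj A"
proof (rule eq_matI)
  fix i j assume ij: "i < dim_row (adj B * adj A)" "j < dim_col (adj B * adj A)"
  then have i: "i < l" and j: "j < m" using assms by auto
  have "adj (A * B) $$ (i, j) = cnj (\<Sum>t<k. A $$ (j, t) * B $$ (t, i))"
    using assms i j by (simp add: scalar_prod_def lessThan_atLeast0)
  also have "\<dots> = (\<Sum>t<k. cnj (B $$ (t, i)) * cnj (A $$ (j, t)))"
    by (simp add: mult.commute)
  also have "\<dots> = (adj B * adj A) $$ (i, j)"
    using assms i j by (simp add: scalar_prod_def lessThan_atLeast0)
  finally show "adj (A * B) $$ (i, j) = (adj B * adj A) $$ (i, j)" .
qed (use assms in auto)

lemma adj_one: "adj (1\<^sub>m m) = 1\<^sub>m m"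
  by (rule eq_matI) auto

lemma unitary_adj: "is_unitary m G \<Longrightarrow> is_unitary m (adj G)"
  unfolding is_unitary_def adj_adj by auto

definition adjg :: "gate \<Rightarrow> gate" where
  "adjg g = (fst g, adj (snd g))"

lemma valid_adjg: "valid_gate n g \<Longrightarrow> valid_gate n (adjg g)"
  unfolding valid_gate_def adjg_def by (cases g) (auto simp: unitary_adj)

lemma embed_adjg:
  assumes v: "valid_gate n g"
  shows "embed_gate n (adjg g) = adj (embed_gate n g)"
proof -
  obtain qs G where g: "g = (qs, G)" by (cases g)
  have G: "G \<in> carrier_mat (2 ^ length qs) (2 ^ length qs)"
    using v g unfolding valid_gate_def is_unitary_def by simp
  show ?thesis
  proof (rule eq_matI)
    fix i j assume "i < dim_row (adj (embed_gate n g))" "j < dim_col (adj (embed_gate n g))"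
    then have i: "i < 2 ^ n" and j: "j < 2 ^ n" by simp_all
    have "(\<forall>q<n. q \<notin> set qs \<longrightarrow> qbit i q = qbit j q) \<longleftrightarrow> (\<forall>q<n. q \<notin> set qs \<longrightarrow> qbit j q = qbit i q)"
      by auto
    then show "embed_gate n (adjg g) $$ (i, j) = adj (embed_gate n g) $$ (i, j)"
      unfolding g adjg_def using i j G loc_index_lt[of qs i] loc_index_lt[of qs j]
      by (auto simp: embed_index)
  qed simp_all
qed

lemma circuit_adj:
  "(\<forall>g\<in>set gs. valid_gate n g) \<Longrightarrow> circuit_mat n (rev (map adjg gs)) = adj (circuit_mat n gs)"
proof (induction gs)
  case Nil
  then show ?case by (simp add: circuit_Nil adj_one)
next
  case (Cons g gs)
  then have "circuit_mat n (rev (map adjg (g # gs))) = adj (circuit_mat n gs) * embed_gate n (adjg g)"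
    by (simp add: circuit_append circuit_single)
  also have "\<dots> = adj (circuit_mat n (g # gs))"
    using Cons.prems embed_adjg[of n g] adj_mult[OF embed_carrier circuit_carrier, of n g gs]
    by (simp add: circuit_Cons)
  finally show ?case .
qed

lemma unitary_dg:
  assumes "\<And>i. i < m \<Longrightarrow> f i * cnj (f i) = 1"
  shows "is_unitary m (dg m f)"
proof -
  have a: "adj (dg m f) = dg m (\<lambda>i. cnj (f i))" by (rule eq_matI) auto
  have "dg m (\<lambda>i. cnj (f i) * f i) = 1\<^sub>m m" "dg m (\<lambda>i. f i * cnj (f i)) = 1\<^sub>m m"
    using assms by (auto intro!: eq_matI simp: mult.commute)
  then show ?thesis unfolding is_unitary_def a by (simp add: dg_mult)
qed



lemma Em_unitary:
  assumes "unit2 e"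
  shows "is_unitary 2 (mat 2 2 (\<lambda>(a, b). Em e a b))"
proof -
  obtain a b where e: "e = (a, b)" by (cases e)
  have u: "a * cnj a + b * cnj b = 1" using unit2_c assms e by simp
  have u': "cnj a * a + cnj b * b = 1" using u by (simp add: mult.commute)
  let ?M = "mat 2 2 (\<lambda>(i, j). Em e i j)"
  have s2: "\<And>f::nat \<Rightarrow> complex. (\<Sum>k\<in>{0..<2}. f k) = f 0 + f 1" by (simp add: numeral_2_eq_2)
  have "adj ?M * ?M = 1\<^sub>m 2"
  proof (rule eq_matI)
    fix i j assume "i < dim_row (1\<^sub>m 2 :: complex mat)" "j < dim_col (1\<^sub>m 2 :: complex mat)"
    then have "i < 2" "j < 2" by auto
    then have "i \<in> {0, 1}" "j \<in> {0, 1}" by auto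
    then show "(adj ?M * ?M) $$ (i, j) = 1\<^sub>m 2 $$ (i, j)"
      by (auto simp: scalar_prod_def s2 Em_def e u u' algebra_simps)
  qed auto
  moreover have "?M * adj ?M = 1\<^sub>m 2"
  proof (rule eq_matI)
    fix i j assume "i < dim_row (1\<^sub>m 2 :: complex mat)" "j < dim_col (1\<^sub>m 2 :: complex mat)"
    then have "i < 2" "j < 2" by auto
    then have "i \<in> {0, 1}" "j \<in> {0, 1}" by auto
    then show "(?M * adj ?M) $$ (i, j) = 1\<^sub>m 2 $$ (i, j)"
      by (auto simp: scalar_prod_def s2 Em_def e u u' algebra_simps)
  qed auto
  ultimately show ?thesis unfolding is_unitary_def by simp
qed

definition ancg :: "nat \<Rightarrow> complex \<times> complex \<Rightarrow> gate" where
  "ancg n e = ([n], mat 2 2 (\<lambda>(a, b). Em e a b))"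

definition cps :: "nat \<Rightarrow> gate list" where
  "cps n = map (\<lambda>q. ([q, n], cpm (omega (2 ^ n) ^ (2 ^ q)))) [0..<n]"

fun midg :: "nat \<Rightarrow> complex \<times> complex \<Rightarrow> (complex \<times> complex) list \<Rightarrow> gate list" where
  "midg n e [] = [ancg n e]"
| "midg n e (f # fs) = ancg n e # cps n @ midg n f fs"

lemma valid_ancg: "unit2 e \<Longrightarrow> valid_gate (Suc n) (ancg n e)"
  unfolding valid_gate_def ancg_def using Em_unitary by simp

lemma omega_norm: "cmod (omega N ^ k) = 1"
  unfolding omega_def by (simp add: norm_power)

lemma valid_cps: "g \<in> set (cps n) \<Longrightarrow> valid_gate (Suc n) g"
proof -
  assume "g \<in> set (cps n)"
  then obtain q where q: "q < n" and g: "g = ([q, n], cpm (omega (2 ^ n) ^ (2 ^ q)))"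
    unfolding cps_def by auto
  let ?ph = "omega (2 ^ n) ^ (2 ^ q)"
  have ph: "?ph * cnj ?ph = 1"
    using complex_norm_square[of ?ph] omega_norm[of "2 ^ n" "2 ^ q"] by simp
  have "is_unitary 4 (cpm ?ph)" unfolding cpm_def
    by (rule unitary_dg) (use ph in auto)
  then show ?thesis unfolding g valid_gate_def using q by simp
qed

lemma length_cps: "length (cps n) = n"
  unfolding cps_def by simp

lemma valid_midg: "unit2 e \<Longrightarrow> (\<forall>f\<in>set fs. unit2 f) \<Longrightarrow> \<forall>g\<in>set (midg n e fs). valid_gate (Suc n) g"
  by (induction fs arbitrary: e) (auto simp: valid_ancg valid_cps)

lemma length_midg: "length (midg n e fs) = Suc (length fs) + length fs * n"
  by (induction fs arbitrary: e) (auto simp: length_cps)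

lemma bd_m2: "bd N W * bd N V = bd N (\<lambda>j. m2 (W j) (V j))"
  unfolding bd_mult m2_def by simp

lemma circuit_midg:
  "circuit_mat (Suc n) (midg n e fs) = bd (2 ^ n) (\<lambda>j. qsp e fs (omega (2 ^ n) ^ j))"
proof (induction fs arbitrary: e)
  case Nil
  show ?case by (simp add: circuit_single ancg_def embed_anc)
next
  case (Cons f fs)
  let ?N = "2 ^ n :: nat"
  let ?x = "omega ?N"
  have c: "circuit_mat (Suc n) (cps n) = bd ?N (\<lambda>j. Dm (?x ^ j))"
    unfolding cps_def circuit_ctrl[of n ?x] by (simp add: Dm_def[abs_def] power_mult[symmetric] mult.commute)
  have "circuit_mat (Suc n) (midg n e (f # fs)) =
      bd ?N (\<lambda>j. Em e) * (bd ?N (\<lambda>j. Dm (?x ^ j)) * bd ?N (\<lambda>j. qsp f fs (?x ^ j)))"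
    by (simp add: circuit_Cons circuit_append ancg_def embed_anc c Cons.IH)
  also have "\<dots> = (bd ?N (\<lambda>j. Em e) * bd ?N (\<lambda>j. Dm (?x ^ j))) * bd ?N (\<lambda>j. qsp f fs (?x ^ j))"
    by (rule assoc_mult_mat[symmetric]) (rule bd_carrier)+
  also have "\<dots> = bd ?N (\<lambda>j. qsp e (f # fs) (?x ^ j))"
    by (simp add: bd_m2)
  finally show ?case .
qed

lemma pow_dg: "dg N f ^\<^sub>m k = dg N (\<lambda>j. f j ^ k)"
  by (induction k) (simp_all add: dg_one dg_mult mult.commute)

lemma foldr_dg:
  "foldr (\<lambda>k M. alpha k \<cdot>\<^sub>m (dg N f ^\<^sub>m k) + M) xs (0\<^sub>m N N) = dg N (\<lambda>j. \<Sum>k\<leftarrow>xs. alpha k * f j ^ k)"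
proof (induction xs)
  case Nil
  then show ?case by (simp add: dg_zero)
next
  case (Cons a xs)
  then show ?case by (simp add: pow_dg dg_smult dg_add)
qed

lemma mat_poly_dg: "mat_poly N alpha d (dg N f) = dg N (\<lambda>j. \<Sum>k\<le>d. alpha k * f j ^ k)"
proof -
  have "(\<Sum>k\<leftarrow>[0..<Suc d]. alpha k * f j ^ k) = (\<Sum>k\<le>d. alpha k * f j ^ k)" for j
    by (simp only: sum_set_upt_conv_sum_list_nat[symmetric] set_upt atLeast0LessThan lessThan_Suc_atMost)
  then show ?thesis unfolding mat_poly_def foldr_dg by simp
qed

lemma sq_mult: "A \<in> carrier_mat N N \<Longrightarrow> B \<in> carrier_mat N N \<Longrightarrow> A * B \<in> carrier_mat N N"
  by (rule mult_carrier_mat)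
lemma sq_add: "A \<in> carrier_mat N N \<Longrightarrow> B \<in> carrier_mat N N \<Longrightarrow> A + B \<in> carrier_mat N N"
  by (rule add_carrier_mat)
lemma sq_smult: "A \<in> carrier_mat N N \<Longrightarrow> k \<cdot>\<^sub>m A \<in> carrier_mat N N"
  by (rule smult_carrier_mat)
lemma sq_assoc: "A \<in> carrier_mat N N \<Longrightarrow> B \<in> carrier_mat N N \<Longrightarrow> C \<in> carrier_mat N N \<Longrightarrow>
  A * B * C = A * (B * C)"
  by (rule assoc_mult_mat)
lemma sq_add_mult: "A \<in> carrier_mat N N \<Longrightarrow> B \<in> carrier_mat N N \<Longrightarrow> C \<in> carrier_mat N N \<Longrightarrow>
  (A + B) * C = A * C + B * C"
  by (rule add_mult_distrib_mat)
lemma sq_mult_add: "A \<in> carrier_mat N N \<Longrightarrow> B \<in> carrier_mat N N \<Longrightarrow> C \<in> carrier_mat N N \<Longrightarrow>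
  A * (B + C) = A * B + A * C"
  by (rule mult_add_distrib_mat)
lemma sq_mult_smult: "A \<in> carrier_mat N N \<Longrightarrow> B \<in> carrier_mat N N \<Longrightarrow> A * (k \<cdot>\<^sub>m B) = (k::complex) \<cdot>\<^sub>m (A * B)"
  by (rule mult_smult_distrib)
lemma sq_smult_mult: "A \<in> carrier_mat N N \<Longrightarrow> B \<in> carrier_mat N N \<Longrightarrow> (k \<cdot>\<^sub>m A) * B = (k::complex) \<cdot>\<^sub>m (A * B)"
  by (rule mult_smult_assoc_mat)

lemmas sq_simps = sq_mult sq_add sq_smult sq_assoc sq_add_mult sq_mult_add sq_mult_smult sq_smult_mult

lemma conj_pow:
  assumes Q: "Q \<in> carrier_mat N N" and A: "A \<in> carrier_mat N N"
    and u1: "adj Q * Q = 1\<^sub>m N" and u2: "Q * adj Q = 1\<^sub>m N"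
  shows "(adj Q * A * Q) ^\<^sub>m k = adj Q * (A ^\<^sub>m k) * Q"
proof (induction k)
  case 0
  have "adj Q * 1\<^sub>m N * Q = adj Q * Q" using Q by simp
  moreover have "dim_row A = N" using A by simp
  ultimately show ?case using Q u1 by simp
next
  case (Suc k)
  have aQ: "adj Q \<in> carrier_mat N N" using Q by simp
  have Ak: "A ^\<^sub>m k \<in> carrier_mat N N" using A by simp
  have r: "Q * (adj Q * X) = X" if "X \<in> carrier_mat N N" for X
    using sq_assoc[OF Q aQ that] u2 that by simp
  have "(adj Q * A * Q) ^\<^sub>m Suc k = (adj Q * A ^\<^sub>m k * Q) * (adj Q * A * Q)" using Suc by simp
  also have "\<dots> = adj Q * (A ^\<^sub>m k * A) * Q"
    using aQ Ak Q A r by (simp add: sq_simps[where N=N])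
  finally show ?case by simp
qed

lemma mat_poly_conj:
  assumes Q: "Q \<in> carrier_mat N N" and A: "A \<in> carrier_mat N N"
    and u1: "adj Q * Q = 1\<^sub>m N" and u2: "Q * adj Q = 1\<^sub>m N"
  shows "mat_poly N alpha d (adj Q * A * Q) = adj Q * mat_poly N alpha d A * Q"
proof -
  have aQ: "adj Q \<in> carrier_mat N N" using Q by simp
  have gen: "foldr (\<lambda>k M. alpha k \<cdot>\<^sub>m ((adj Q * A * Q) ^\<^sub>m k) + M) xs (0\<^sub>m N N) =
     adj Q * foldr (\<lambda>k M. alpha k \<cdot>\<^sub>m (A ^\<^sub>m k) + M) xs (0\<^sub>m N N) * Q" for xs
  proof (induction xs)
    case Nil
    then show ?case using aQ Q by simp
  next
    case (Cons a xs)
    define R where "R = foldr (\<lambda>k M. alpha k \<cdot>\<^sub>m (A ^\<^sub>m k) + M) xs (0\<^sub>m N N)"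
    have R: "R \<in> carrier_mat N N" unfolding R_def
      by (induction xs) (auto intro!: add_carrier_mat smult_carrier_mat pow_carrier_mat A)
    have Ak: "A ^\<^sub>m a \<in> carrier_mat N N" using A by simp
    have "foldr (\<lambda>k M. alpha k \<cdot>\<^sub>m ((adj Q * A * Q) ^\<^sub>m k) + M) (a # xs) (0\<^sub>m N N) =
       alpha a \<cdot>\<^sub>m (adj Q * A ^\<^sub>m a * Q) + adj Q * R * Q"
      using Cons conj_pow[OF Q A u1 u2] unfolding R_def by simp
    also have "\<dots> = adj Q * (alpha a \<cdot>\<^sub>m A ^\<^sub>m a + R) * Q"
      using aQ Q Ak R by (simp add: sq_simps[where N=N])
    finally show ?case unfolding R_def by simp
  qed
  show ?thesis unfolding mat_poly_def gen ..
qed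

lemma fb_mult_left:
  assumes A: "A \<in> carrier_mat N N" and B: "B1 \<in> carrier_mat N N" "B2 \<in> carrier_mat N N"
    "B3 \<in> carrier_mat N N" "B4 \<in> carrier_mat N N"
  shows "four_block_mat A (0\<^sub>m N N) (0\<^sub>m N N) A * four_block_mat B1 B2 B3 B4 =
    four_block_mat (A * B1) (A * B2) (A * B3) (A * B4)"
proof -
  have c: "A * B1 \<in> carrier_mat N N" "A * B2 \<in> carrier_mat N N" "A * B3 \<in> carrier_mat N N" "A * B4 \<in> carrier_mat N N"
    using A B by auto
  show ?thesis
    by (subst mult_four_block_mat[of _ N N _ N _ N _ _ N _ N]) (use A B c in simp_all)
qed

lemma fb_mult_right:
  assumes A: "A \<in> carrier_mat N N" and B: "B1 \<in> carrier_mat N N" "B2 \<in> carrier_mat N N"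
    "B3 \<in> carrier_mat N N" "B4 \<in> carrier_mat N N"
  shows "four_block_mat B1 B2 B3 B4 * four_block_mat A (0\<^sub>m N N) (0\<^sub>m N N) A =
    four_block_mat (B1 * A) (B2 * A) (B3 * A) (B4 * A)"
proof -
  have c: "B1 * A \<in> carrier_mat N N" "B2 * A \<in> carrier_mat N N" "B3 * A \<in> carrier_mat N N" "B4 * A \<in> carrier_mat N N"
    using A B by auto
  show ?thesis
    by (subst mult_four_block_mat[of _ N N _ N _ N _ _ N _ N]) (use A B c in simp_all)
qed

lemma valid_Suc: "valid_gate n g \<Longrightarrow> valid_gate (Suc n) g"
  unfolding valid_gate_def by (cases g) auto

lemma U_omega_dg: "U_omega N = dg N (\<lambda>j. omega N ^ j)"
  unfolding U_omega_def dg_def by simp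

theorem theorem11:
  fixes K :: real
  shows "\<exists>C :: real. \<forall>(n :: nat) (lam :: nat \<Rightarrow> complex vec) (Q :: complex mat)
      (gsQ :: gate list) (\<chi> :: nat) (alpha :: nat \<Rightarrow> complex) (d :: nat) (c :: real).
     n \<ge> 1 \<longrightarrow>
     orthonormal_basis (2 ^ n) lam \<longrightarrow>
     is_unitary (2 ^ n) Q \<longrightarrow>
     U_omega_lambda (2 ^ n) lam = adj Q * U_omega (2 ^ n) * Q \<longrightarrow>
     implements n gsQ Q \<longrightarrow> real (length gsQ) \<le> K * real \<chi> \<longrightarrow>
     alpha d \<noteq> 0 \<longrightarrow>
     (\<forall>x :: complex. cmod x = 1 \<longrightarrow> (cmod (\<Sum>k\<le>d. alpha k * x ^ k))\<^sup>2 \<le> c) \<longrightarrow>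
     (\<exists>gs :: gate list. \<exists>V :: complex mat.
        implements (n + 1) gs V \<and>
        top_left_block n V ((1 / complex_of_real (sqrt c)) \<cdot>\<^sub>m
                              mat_poly (2 ^ n) alpha d (U_omega_lambda (2 ^ n) lam)) \<and>
        real (length gs) \<le> C * (real d * log 2 (real (2 ^ n)) + real \<chi> + 1))"
proof -
  define C :: real where "C = 2 * max K 0 + 2"
  show ?thesis
  proof (intro exI[of _ C] allI impI)
    fix n :: nat and lam :: "nat \<Rightarrow> complex vec" and Q :: "complex mat" and gsQ :: "gate list"
      and \<chi> :: nat and alpha :: "nat \<Rightarrow> complex" and d :: nat and c :: real
    assume n1: "1 \<le> n" and onb: "orthonormal_basis (2 ^ n) lam" and uQ: "is_unitary (2 ^ n) Q"
      and hU: "U_omega_lambda (2 ^ n) lam = adj Q * U_omega (2 ^ n) * Q"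
      and impl: "implements n gsQ Q" and lenQ: "real (length gsQ) \<le> K * real \<chi>"
      and ad: "alpha d \<noteq> 0"
      and bnd: "\<forall>x :: complex. cmod x = 1 \<longrightarrow> (cmod (\<Sum>k\<le>d. alpha k * x ^ k))\<^sup>2 \<le> c"
    let ?N = "2 ^ n :: nat"
    define P where "P = (\<Sum>k\<le>d. monom (alpha k) k)"
    have polyP: "poly P x = (\<Sum>k\<le>d. alpha k * x ^ k)" for x
      by (simp add: P_def poly_sum poly_monom)
    have dP: "degree P \<le> d" unfolding P_def
      by (rule degree_sum_le) (auto intro: order.trans[OF degree_monom_le])
    have "coeff P d = alpha d" unfolding P_def by (simp add: coeff_sum coeff_monom)
    then have P0: "P \<noteq> 0" using ad by auto
    have cpos: "c > 0"
    proof (rule ccontr)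
      assume "\<not> c > 0"
      have "poly P x = poly 0 x" if "cmod x = 1" for x
      proof -
        have "(cmod (poly P x))^2 \<le> c" using bnd that polyP[of x] by simp
        then have "(cmod (poly P x))^2 \<le> 0" using \<open>\<not> c > 0\<close> by linarith
        then show ?thesis by simp
      qed
      then have "P = 0" by (rule poly_eq_circle)
      then show False using P0 by simp
    qed
    define sc where "sc = sqrt c"
    have sc0: "sc > 0" using cpos unfolding sc_def by simp
    define p where "p = smult (1 / complex_of_real sc) P"
    have polyp: "poly p x = poly P x / complex_of_real sc" for x unfolding p_def by simp
    have dp: "degree p \<le> d" unfolding p_def using dP degree_smult_le order.trans by blast
    have pb: "cmod (poly p x) \<le> 1" if x: "cmod x = 1" for x
    proof -
      have "(cmod (poly P x))^2 \<le> c" using bnd x polyP by simp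
      then have "cmod (poly P x) \<le> sc" unfolding sc_def by (rule real_le_rsqrt)
      then show ?thesis unfolding polyp using sc0 by (simp add: norm_divide)
    qed
    obtain q where dq: "degree q \<le> d"
      and un: "\<forall>x. cmod x = 1 \<longrightarrow> (cmod (poly p x))^2 + (cmod (poly q x))^2 = 1"
      using complement[OF dp pb] by blast
    obtain e fs where lfs: "length fs = d" and ue: "unit2 e" and ufs: "\<forall>f\<in>set fs. unit2 f"
      and W: "\<forall>x. qsp e fs x 0 0 = poly p x \<and> qsp e fs x 1 0 = poly q x"
      using qsp_exists[OF dp dq un] by blast
    have vQ: "\<forall>g\<in>set gsQ. valid_gate n g" and CQ: "circuit_mat n gsQ = Q"
      using impl unfolding implements_def by auto
    have Qc: "Q \<in> carrier_mat ?N ?N" and u1: "adj Q * Q = 1\<^sub>m ?N" and u2: "Q * adj Q = 1\<^sub>m ?N"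
      using uQ unfolding is_unitary_def by auto
    have aQ: "adj Q \<in> carrier_mat ?N ?N" using Qc by simp
    define gs where "gs = rev (map adjg gsQ) @ midg n e fs @ gsQ"
    define V where "V = circuit_mat (Suc n) gs"
    have vA: "\<forall>g\<in>set (rev (map adjg gsQ)). valid_gate n g" using vQ valid_adjg by auto
    have vA': "\<forall>g\<in>set (rev (map adjg gsQ)). valid_gate (Suc n) g" using vA valid_Suc by blast
    have vQ': "\<forall>g\<in>set gsQ. valid_gate (Suc n) g" using vQ valid_Suc by blast
    have valid: "\<forall>g\<in>set gs. valid_gate (Suc n) g"
      unfolding gs_def set_append using vA' vQ' valid_midg[OF ue ufs, of n] by blast
    have impV: "implements (n + 1) gs V" unfolding implements_def V_def using valid by simp
    define D where "D = dg ?N (\<lambda>j. poly p (omega ?N ^ j))"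
    have Dc: "D \<in> carrier_mat ?N ?N" unfolding D_def by simp
    have c1: "circuit_mat (Suc n) (rev (map adjg gsQ)) =
        four_block_mat (adj Q) (0\<^sub>m ?N ?N) (0\<^sub>m ?N ?N) (adj Q)"
      using circuit_lift[OF vA] circuit_adj[OF vQ] CQ by simp
    have c3: "circuit_mat (Suc n) gsQ = four_block_mat Q (0\<^sub>m ?N ?N) (0\<^sub>m ?N ?N) Q"
      using circuit_lift[OF vQ] CQ by simp
    have c2: "circuit_mat (Suc n) (midg n e fs) = four_block_mat D
        (dg ?N (\<lambda>j. qsp e fs (omega ?N ^ j) 0 1)) (dg ?N (\<lambda>j. qsp e fs (omega ?N ^ j) 1 0))
        (dg ?N (\<lambda>j. qsp e fs (omega ?N ^ j) 1 1))"
      unfolding circuit_midg bd_def D_def using W by simp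
    define X1 where "X1 = dg ?N (\<lambda>j. qsp e fs (omega ?N ^ j) 0 1)"
    define X2 where "X2 = dg ?N (\<lambda>j. qsp e fs (omega ?N ^ j) 1 0)"
    define X3 where "X3 = dg ?N (\<lambda>j. qsp e fs (omega ?N ^ j) 1 1)"
    have Xc: "X1 \<in> carrier_mat ?N ?N" "X2 \<in> carrier_mat ?N ?N" "X3 \<in> carrier_mat ?N ?N"
      unfolding X1_def X2_def X3_def by simp_all
    have BB: "circuit_mat (Suc n) (midg n e fs) * circuit_mat (Suc n) gsQ =
        four_block_mat (D * Q) (X1 * Q) (X2 * Q) (X3 * Q)"
      unfolding c2 c3 X1_def[symmetric] X2_def[symmetric] X3_def[symmetric]
      by (rule fb_mult_right[OF Qc Dc Xc])
    have Vf: "V = four_block_mat (adj Q * (D * Q)) (adj Q * (X1 * Q)) (adj Q * (X2 * Q)) (adj Q * (X3 * Q))"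
      unfolding V_def gs_def circuit_append BB c1
      by (rule fb_mult_left[OF aQ]) (use Dc Qc Xc in auto)
    have Uc: "U_omega ?N \<in> carrier_mat ?N ?N" unfolding U_omega_def by simp
    have m1: "mat_poly ?N alpha d (U_omega_lambda ?N lam) = adj Q * mat_poly ?N alpha d (U_omega ?N) * Q"
      using hU mat_poly_conj[OF Qc Uc u1 u2] by simp
    have m2: "mat_poly ?N alpha d (U_omega ?N) = dg ?N (\<lambda>j. poly P (omega ?N ^ j))"
      unfolding U_omega_dg mat_poly_dg by (simp add: polyP)
    have "(1 / complex_of_real (sqrt c)) \<cdot>\<^sub>m mat_poly ?N alpha d (U_omega_lambda ?N lam)
        = (1 / complex_of_real sc) \<cdot>\<^sub>m (adj Q * dg ?N (\<lambda>j. poly P (omega ?N ^ j)) * Q)"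
      by (simp only: m1 m2 sc_def)
    also have "\<dots> = adj Q * (D * Q)"
      unfolding D_def polyp using aQ Qc
      by (simp add: sq_simps[where N="?N"] dg_smult[symmetric] divide_inverse mult.commute)
    finally have tgt: "(1 / complex_of_real (sqrt c)) \<cdot>\<^sub>m mat_poly ?N alpha d (U_omega_lambda ?N lam)
        = adj Q * (D * Q)" .
    have tl: "top_left_block n V ((1 / complex_of_real (sqrt c)) \<cdot>\<^sub>m mat_poly ?N alpha d (U_omega_lambda ?N lam))"
      unfolding top_left_block_def tgt Vf
    proof (intro allI impI)
      fix i j assume "i < ?N" "j < ?N"
      then show "four_block_mat (adj Q * (D * Q)) (adj Q * (X1 * Q)) (adj Q * (X2 * Q)) (adj Q * (X3 * Q)) $$ (i, j) =
          (adj Q * (D * Q)) $$ (i, j)"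
        using aQ Qc Dc Xc by (simp add: index_mat_four_block)
    qed
    have lg: "log 2 (real (2 ^ n)) = real n" by simp
    have len: "length gs = 2 * length gsQ + Suc d + d * n"
      unfolding gs_def by (simp add: length_midg lfs)
    have "real (length gs) \<le> C * (real d * log 2 (real (2 ^ n)) + real \<chi> + 1)"
    proof -
      define Kp where "Kp = max K 0"
      have Kp0: "Kp \<ge> 0" unfolding Kp_def by simp
      have "real (length gsQ) \<le> Kp * real \<chi>"
        using lenQ unfolding Kp_def by (meson max.cobounded1 mult_right_mono of_nat_0_le_iff order.trans)
      moreover have "real d \<le> real d * real n" using n1 mult_left_mono[of 1 "real n" "real d"] by simp
      moreover have "0 \<le> Kp * (real d * real n)" "0 \<le> Kp * real \<chi>" using Kp0 by simp_all
      moreover have "C * (real d * real n + real \<chi> + 1) =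
          2 * Kp * (real d * real n) + 2 * Kp * real \<chi> + 2 * Kp + 2 * (real d * real n) + 2 * real \<chi> + 2"
        unfolding C_def Kp_def[symmetric] by (simp add: algebra_simps)
      moreover have "real (length gs) = 2 * real (length gsQ) + real d + 1 + real d * real n"
        using len by simp
      ultimately show ?thesis unfolding lg using Kp0 by linarith
    qed
    then show "\<exists>gs V. implements (n + 1) gs V \<and>
        top_left_block n V ((1 / complex_of_real (sqrt c)) \<cdot>\<^sub>m mat_poly (2 ^ n) alpha d (U_omega_lambda (2 ^ n) lam)) \<and>
        real (length gs) \<le> C * (real d * log 2 (real (2 ^ n)) + real \<chi> + 1)"
      using impV tl by blast
  qed
qed


end
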